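(* Let $p$ be an odd prime, $q=p^m$ with $m>1$, and $S=S_\Lambda(q)$. Then $V=\Lambda(q)$ and $U[V,S]$ are the unique normal subgroups of $S$ of index $q$ which have exponent $p$. In particular, $U[V,S]$ is characteristic in $S$.
   Context: Let $\mathbb{K}=\mathbb{F}_q$; $V_p(q)$ is the $\mathbb{K}$-space of homogeneous polynomials of degree $p$ in $\mathbb{K}[x,y]$ with right $\mathrm{GL}_2(\mathbb{K})$-action $f\cdot\begin{pmatrix}a&b\\c&d\end{pmatrix}=f(ax+by,cx+dy)$; $\Lambda(q)=\mathrm{Hom}_{\mathbb{K}}(V_p(q),\mathbb{K})$ with $(w)(\eta g)=(wg^{-1})\eta$. $U=\{\begin{pmatrix}1&0\\c&1\end{pmatrix}:c\in\mathbb{K}\}$ and $S_\Lambda(q)=U\ltimes\Lambda(q)$, with $U$ and $V=\Lambda(q)$ identified as subgroups of $S$; $[V,S]$ is the commutator subgroup. *)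

theory Defs
  imports "HOL-Algebra.Algebra" "HOL-Computational_Algebra.Polynomial"
begin

text \<open>Bivariate polynomials K[x,y] are represented as K[x][y], i.e. the type 'k poly poly:
  coeff (coeff f j) i is the coefficient of x^i y^j.\<close>

definition bX :: "'k::comm_ring_1 poly poly" where "bX = [:[:0, 1:]:]"
definition bY :: "'k::comm_ring_1 poly poly" where "bY = [:0, 1:]"

definition bsubst :: "'k::comm_ring_1 poly poly \<Rightarrow> 'k poly poly \<Rightarrow> 'k poly poly \<Rightarrow> 'k poly poly" where
  "bsubst f A B = poly (map_poly (\<lambda>c. poly (map_poly (\<lambda>k. [:[:k:]:]) c) A) f) B"

definition homog :: "nat \<Rightarrow> 'k::comm_ring_1 poly poly \<Rightarrow> bool" where
  "homog n f \<longleftrightarrow> (\<forall>i j. coeff (coeff f j) i \<noteq> 0 \<longrightarrow> i + j = n)"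

definition Vhom :: "nat \<Rightarrow> 'k::field poly poly set" where
  "Vhom n = {f. homog n f}"

text \<open>2x2 matrices (a,b,c,d) = ((a,b),(c,d)); right action f.g = f(ax+by, cx+dy).\<close>
type_synonym 'k mat2 = "'k \<times> 'k \<times> 'k \<times> 'k"

definition hact :: "'k::field poly poly \<Rightarrow> 'k mat2 \<Rightarrow> 'k poly poly" where
  "hact f g = (case g of (a, b, c, d) \<Rightarrow>
     bsubst f ([:[:a:]:] * bX + [:[:b:]:] * bY) ([:[:c:]:] * bX + [:[:d:]:] * bY))"

definition mat2_inv :: "'k::field mat2 \<Rightarrow> 'k mat2" where
  "mat2_inv g = (case g of (a, b, c, d) \<Rightarrow>
     (let \<delta> = a * d - b * c in (d / \<delta>, - b / \<delta>, - c / \<delta>, a / \<delta>)))"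

text \<open>Lambda(q) = Hom_K(V_n(q), K); linear functionals, extended by 0 outside V_n(q).\<close>
definition Lambda :: "nat \<Rightarrow> ('k::field poly poly \<Rightarrow> 'k) set" where
  "Lambda n = {\<eta>. (\<forall>f\<in>Vhom n. \<forall>g\<in>Vhom n. \<eta> (f + g) = \<eta> f + \<eta> g)
                 \<and> (\<forall>a. \<forall>f\<in>Vhom n. \<eta> (smult [:a:] f) = a * \<eta> f)
                 \<and> (\<forall>f. f \<notin> Vhom n \<longrightarrow> \<eta> f = 0)}"

definition dact :: "nat \<Rightarrow> ('k::field poly poly \<Rightarrow> 'k) \<Rightarrow> 'k mat2 \<Rightarrow> ('k poly poly \<Rightarrow> 'k)" where
  "dact n \<eta> g = (\<lambda>w. if w \<in> Vhom n then \<eta> (hact w (mat2_inv g)) else 0)"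

definition umat :: "'k::field \<Rightarrow> 'k mat2" where "umat c = (1, 0, c, 1)"

text \<open>S_Lambda(q) = U \<ltimes> Lambda(q); the pair (c, \<eta>) stands for u_c \<eta>, so that
  (u_c1 \<eta>1)(u_c2 \<eta>2) = u_(c1+c2) ((\<eta>1 u_c2) + \<eta>2), i.e. \<eta>^u = u^-1 \<eta> u = \<eta> u.\<close>
definition S_Lambda :: "nat \<Rightarrow> ('k::{field,finite} \<times> ('k poly poly \<Rightarrow> 'k)) monoid" where
  "S_Lambda n = \<lparr> partial_object.carrier = UNIV \<times> Lambda n,
      monoid.mult = (\<lambda>(c1, \<eta>1) (c2, \<eta>2). (c1 + c2, (\<lambda>w. dact n \<eta>1 (umat c2) w + \<eta>2 w))),
      monoid.one = (0, (\<lambda>_. 0)) \<rparr>"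

definition U_sub :: "nat \<Rightarrow> ('k::{field,finite} \<times> ('k poly poly \<Rightarrow> 'k)) set" where
  "U_sub n = {(c, (\<lambda>_. 0)) | c. True}"

definition V_sub :: "nat \<Rightarrow> ('k::{field,finite} \<times> ('k poly poly \<Rightarrow> 'k)) set" where
  "V_sub n = {(0, \<eta>) | \<eta>. \<eta> \<in> Lambda n}"

definition comm_sub :: "('a, 'b) monoid_scheme \<Rightarrow> 'a set \<Rightarrow> 'a set \<Rightarrow> 'a set" where
  "comm_sub G A B = generate G
     {a \<otimes>\<^bsub>G\<^esub> b \<otimes>\<^bsub>G\<^esub> inv\<^bsub>G\<^esub> a \<otimes>\<^bsub>G\<^esub> inv\<^bsub>G\<^esub> b | a b. a \<in> A \<and> b \<in> B}"

definition has_exponent :: "('a, 'b) monoid_scheme \<Rightarrow> 'a set \<Rightarrow> nat \<Rightarrow> bool" where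
  "has_exponent G H e \<longleftrightarrow> 0 < e \<and> (\<forall>x\<in>H. x [^]\<^bsub>G\<^esub> e = \<one>\<^bsub>G\<^esub>)
     \<and> (\<forall>k. 0 < k \<and> (\<forall>x\<in>H. x [^]\<^bsub>G\<^esub> k = \<one>\<^bsub>G\<^esub>) \<longrightarrow> e \<le> k)"

definition characteristic :: "('a, 'b) monoid_scheme \<Rightarrow> 'a set \<Rightarrow> bool" where
  "characteristic G H \<longleftrightarrow> (\<forall>\<phi>\<in>iso G G. \<phi> ` H = H)"

end

theory Submission imports Defs "HOL-Number_Theory.Residues" "HOL-Library.Function_Algebras" begin

definition fi :: "nat \<Rightarrow> nat \<Rightarrow> 'k::field poly poly" where
  "fi n i = monom (monom 1 (n - i)) i"
definition dc :: "nat \<Rightarrow> nat \<Rightarrow> 'k::field poly poly \<Rightarrow> 'k" where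
  "dc n j w = coeff (coeff w j) (n - j)"
definition Bt :: "'k::field \<Rightarrow> 'k poly poly" where
  "Bt t = [:[:0, -t:], 1:]"

lemma poly_const_X: "poly (map_poly (\<lambda>k. [:[:k:]:]) c) (bX :: 'k::comm_ring_1 poly poly) = [:c:]"
proof (induction c)
  case 0 then show ?case by simp
next
  case (pCons a c)
  then show ?case by (simp add: map_poly_pCons bX_def)
qed

lemma bsubst_X: "bsubst w bX B = pcompose w B"
  by (simp add: bsubst_def pcompose_altdef poly_const_X)

lemma hact_umat: "hact w (mat2_inv (umat t)) = pcompose w (Bt t)"
proof -
  have 1: "[:[:1:]:] * bX + [:[:0:]:] * bY = (bX :: 'a poly poly)" by (simp add: one_pCons[symmetric])
  have 2: "[:[:-t:]:] * bX + [:[:1:]:] * bY = Bt t"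
    by (simp add: Bt_def bX_def bY_def)
  have 3: "mat2_inv (umat t) = (1, 0, -t, 1)" by (simp add: mat2_inv_def umat_def)
  show ?thesis
    by (simp only: hact_def 3 1 2 bsubst_X prod.case)
qed

lemma homog_expand:
  assumes "homog n w"
  shows "w = (\<Sum>j\<le>n. monom (monom (dc n j w) (n - j)) j)"
proof (rule poly_eqI)
  fix a
  show "coeff w a = coeff (\<Sum>j\<le>n. monom (monom (dc n j w) (n - j)) j) a"
  proof (rule poly_eqI)
    fix b
    have "coeff (coeff w a) b = (if a \<le> n \<and> b = n - a then dc n a w else 0)"
    proof (cases "coeff (coeff w a) b = 0")
      case False
      then have "b + a = n" using assms by (auto simp: homog_def)
      then show ?thesis by (auto simp: dc_def)
    qed (auto simp: dc_def)
    then show "coeff (coeff w a) b = coeff (coeff (\<Sum>j\<le>n. monom (monom (dc n j w) (n - j)) j) a) b"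
    proof -
      have "coeff (\<Sum>j\<le>n. monom (monom (dc n j w) (n - j)) j) a
          = (\<Sum>j\<le>n. if a = j then monom (dc n j w) (n - j) else 0)"
        by (simp add: coeff_sum coeff_monom)
      also have "\<dots> = (if a \<le> n then monom (dc n a w) (n - a) else 0)"
        by (simp add: sum.delta)
      finally show ?thesis using \<open>coeff (coeff w a) b = _\<close> by (simp add: coeff_monom)
    qed
  qed
qed

lemma pcompose_power: "pcompose (p ^ j) q = (pcompose p q) ^ j"
  by (induction j) (simp_all add: pcompose_mult pcompose_1)

lemma pcompose_monom: "pcompose (monom c j) q = smult c (q ^ j)"
  by (simp add: monom_altdef pcompose_smult pcompose_power pcompose_pCons)

lemma const_X_pow: "[:[:0, a:]:] ^ r = [:monom (a ^ r) r:]"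
proof -
  have "[:0, a:] = monom a 1" by (simp add: monom_Suc monom_0)
  then show ?thesis by (simp add: poly_const_pow monom_power monom_0)
qed

lemma term_eq:
  "smult (monom (a::'k::field) k) (of_nat c * [:0,1:]^i * [:[:0,-t:]:]^r)
     = monom (monom (a * of_nat c * (-t)^r) (k + r)) i"
proof -
  have eq: "of_nat c * [:0,1:]^i * [:[:0,-t:]:]^r = smult (of_nat c * monom ((-t)^r) r) ([:0,1::'k poly:]^i)"
    by (simp add: const_X_pow of_nat_poly[where 'a="'k poly"] mult.commute[of _ "[:_:]"] mult.assoc) (simp add: mult.commute)
  show ?thesis unfolding eq
    by (simp add: smult_smult monom_altdef[symmetric] of_nat_poly mult_monom smult_monom mult_ac)
qed

lemma smult_sum_right: "smult a (sum f A) = (\<Sum>i\<in>A. smult a (f i))"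
  by (induction A rule: infinite_finite_induct) (simp_all add: smult_add_right)

lemma Bt_split: "Bt t = [:0, 1:] + [:[:0, -t:]:]"
  by (simp add: Bt_def)

lemma pcompose_mm:
  "pcompose (monom (monom (a::'k::field) k) j) (Bt t)
     = (\<Sum>i\<le>j. monom (monom (a * of_nat (j choose i) * (-t)^(j-i)) (k + (j - i))) i)"
proof -
  have "pcompose (monom (monom a k) j) (Bt t) = smult (monom a k) ((Bt t) ^ j)"
    by (simp add: pcompose_monom)
  also have "\<dots> = smult (monom a k) (\<Sum>i\<le>j. of_nat (j choose i) * [:0,1:]^i * [:[:0,-t:]:]^(j-i))"
    by (simp only: Bt_split binomial_ring)
  also have "\<dots> = (\<Sum>i\<le>j. smult (monom a k) (of_nat (j choose i) * [:0,1:]^i * [:[:0,-t:]:]^(j-i)))"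
    by (simp add: smult_sum_right)
  also have "\<dots> = (\<Sum>i\<le>j. monom (monom (a * of_nat (j choose i) * (-t)^(j-i)) (k + (j - i))) i)"
    by (simp add: term_eq)
  finally show ?thesis .
qed

lemma coeff_mm: "coeff (coeff (monom (monom a k) i) j) l = (if j = i \<and> l = k then a else 0)"
  by (simp add: coeff_monom)

lemma homog_mm: "i \<le> n \<Longrightarrow> homog n (monom (monom a (n - i)) i)"
  by (simp add: homog_def coeff_monom)

lemma homog_0: "homog n 0"
  by (simp add: homog_def)

lemma homog_add: "homog n f \<Longrightarrow> homog n g \<Longrightarrow> homog n (f + g)"
  by (auto simp: homog_def) (metis add_0 add.right_neutral)

lemma homog_sum: "(\<And>i. i \<in> A \<Longrightarrow> homog n (g i)) \<Longrightarrow> homog n (sum g A)"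
  by (induction A rule: infinite_finite_induct) (simp_all add: homog_0 homog_add)

lemma homog_smult: "homog n f \<Longrightarrow> homog n (smult [:a:] f)"
  by (auto simp: homog_def) (metis mult_zero_right)

lemma homog_uminus: "homog n f \<Longrightarrow> homog n (- f)"
  by (auto simp: homog_def)

lemma Vhom_iff: "f \<in> Vhom n \<longleftrightarrow> homog n f"
  by (simp add: Vhom_def)

lemma fi_Vhom: "i \<le> n \<Longrightarrow> fi n i \<in> Vhom n"
  by (simp add: Vhom_iff fi_def homog_mm)

lemma dc_fi: "i \<le> n \<Longrightarrow> j \<le> n \<Longrightarrow> dc n j (fi n i) = (if j = i then 1 else 0)"
  by (auto simp: dc_def fi_def coeff_monom)

lemma pcompose_Bt:
  assumes "homog n w"
  shows "pcompose w (Bt t) = (\<Sum>j\<le>n. \<Sum>i\<le>j.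
           monom (monom (dc n j w * of_nat (j choose i) * (-t)^(j-i)) (n - i)) i)"
proof -
  have "pcompose w (Bt t) = pcompose (\<Sum>j\<le>n. monom (monom (dc n j w) (n - j)) j) (Bt t)"
    using homog_expand[OF assms] by simp
  also have "\<dots> = (\<Sum>j\<le>n. pcompose (monom (monom (dc n j w) (n - j)) j) (Bt t))"
    by (simp add: pcompose_sum)
  also have "\<dots> = (\<Sum>j\<le>n. \<Sum>i\<le>j.
           monom (monom (dc n j w * of_nat (j choose i) * (-t)^(j-i)) (n - i)) i)"
  proof (rule sum.cong[OF refl])
    fix j assume "j \<in> {..n}"
    then show "pcompose (monom (monom (dc n j w) (n - j)) j) (Bt t) = (\<Sum>i\<le>j.
           monom (monom (dc n j w * of_nat (j choose i) * (-t)^(j-i)) (n - i)) i)"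
      by (auto simp: pcompose_mm intro!: sum.cong)
  qed
  finally show ?thesis .
qed

lemma homog_pcompose_Bt: "homog n w \<Longrightarrow> homog n (pcompose w (Bt t))"
  by (auto simp: pcompose_Bt intro!: homog_sum homog_mm)

lemma Bt_0: "Bt 0 = [:0, 1:]"
  by (simp add: Bt_def)

lemma Bt_comp: "pcompose (Bt s) (Bt t) = Bt (s + t)"
  by (simp add: Bt_def pcompose_pCons)

lemma sum_fun_apply: "(sum f A) x = (\<Sum>a\<in>A. f a x)"
  by (induction A rule: infinite_finite_induct) auto

definition act :: "nat \<Rightarrow> 'k::field \<Rightarrow> ('k poly poly \<Rightarrow> 'k) \<Rightarrow> ('k poly poly \<Rightarrow> 'k)" where
  "act n t \<eta> = dact n \<eta> (umat t)"

definition dl :: "nat \<Rightarrow> nat \<Rightarrow> ('k::field poly poly \<Rightarrow> 'k)" where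
  "dl n k = (\<lambda>w. if w \<in> Vhom n then dc n k w else 0)"

lemma act_apply: "act n t \<eta> w = (if w \<in> Vhom n then \<eta> (pcompose w (Bt t)) else 0)"
  by (simp add: act_def dact_def hact_umat)

lemma Vhom_add: "f \<in> Vhom n \<Longrightarrow> g \<in> Vhom n \<Longrightarrow> f + g \<in> Vhom n"
  by (simp add: Vhom_iff homog_add)
lemma Vhom_smult: "f \<in> Vhom n \<Longrightarrow> smult [:a:] f \<in> Vhom n"
  by (simp add: Vhom_iff homog_smult)
lemma Vhom_0: "0 \<in> Vhom n"
  by (simp add: Vhom_iff homog_0)
lemma Vhom_sum: "(\<And>i. i \<in> A \<Longrightarrow> g i \<in> Vhom n) \<Longrightarrow> sum g A \<in> Vhom n"
  by (simp add: Vhom_iff homog_sum)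
lemma Vhom_mm: "i \<le> n \<Longrightarrow> monom (monom a (n - i)) i \<in> Vhom n"
  by (simp add: Vhom_iff homog_mm)
lemma Vhom_Bt: "w \<in> Vhom n \<Longrightarrow> pcompose w (Bt t) \<in> Vhom n"
  by (simp add: Vhom_iff homog_pcompose_Bt)

lemma lam_out: "\<eta> \<in> Lambda n \<Longrightarrow> w \<notin> Vhom n \<Longrightarrow> \<eta> w = 0"
  by (simp add: Lambda_def)
lemma lam_add: "\<eta> \<in> Lambda n \<Longrightarrow> f \<in> Vhom n \<Longrightarrow> g \<in> Vhom n \<Longrightarrow> \<eta> (f + g) = \<eta> f + \<eta> g"
  by (simp add: Lambda_def)
lemma lam_smult: "\<eta> \<in> Lambda n \<Longrightarrow> f \<in> Vhom n \<Longrightarrow> \<eta> (smult [:a:] f) = a * \<eta> f"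
  by (simp add: Lambda_def)
lemma lam_0: "\<eta> \<in> Lambda n \<Longrightarrow> \<eta> 0 = 0"
  using lam_smult[of \<eta> n 0 0] Vhom_0[of n] by simp

lemma lam_sum: "\<eta> \<in> Lambda n \<Longrightarrow> (\<And>i. i \<in> A \<Longrightarrow> g i \<in> Vhom n) \<Longrightarrow> \<eta> (sum g A) = (\<Sum>i\<in>A. \<eta> (g i))"
proof (induction A rule: infinite_finite_induct)
  case (infinite A) then show ?case by (simp add: lam_0)
next
  case empty then show ?case by (simp add: lam_0)
next
  case (insert x F)
  then show ?case by (simp add: lam_add Vhom_sum)
qed

lemma mm_smult: "monom (monom (a::'k::field) k) i = smult [:a:] (monom (monom 1 k) i)"
  by (simp add: smult_monom)

lemma lam_mm: "\<eta> \<in> Lambda n \<Longrightarrow> i \<le> n \<Longrightarrow> \<eta> (monom (monom a (n - i)) i) = a * \<eta> (fi n i)"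
  unfolding fi_def by (subst mm_smult) (simp add: lam_smult Vhom_mm)

lemma lam_expand: "\<eta> \<in> Lambda n \<Longrightarrow> w \<in> Vhom n \<Longrightarrow> \<eta> w = (\<Sum>j\<le>n. dc n j w * \<eta> (fi n j))"
  apply (subst homog_expand[of n w])
   apply (simp add: Vhom_iff)
  apply (subst lam_sum[where n=n])
    apply (auto intro!: Vhom_mm sum.cong simp: lam_mm)
  done

lemma lam_act: "\<eta> \<in> Lambda n \<Longrightarrow> w \<in> Vhom n \<Longrightarrow>
   act n t \<eta> w = (\<Sum>j\<le>n. \<Sum>i\<le>j. dc n j w * of_nat (j choose i) * (-t)^(j-i) * \<eta> (fi n i))"
  apply (simp add: act_apply)
  apply (subst pcompose_Bt[of n])
   apply (simp add: Vhom_iff)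
  apply (subst lam_sum[where n=n], assumption)
   apply (auto intro!: Vhom_mm Vhom_sum)[1]
  apply (rule sum.cong[OF refl])
  apply (subst lam_sum[where n=n], assumption)
   apply (auto intro!: Vhom_mm)[1]
  apply (rule sum.cong[OF refl])
  apply (simp add: lam_mm)
  done

lemma Lambda_I:
  assumes "\<And>f g. f \<in> Vhom n \<Longrightarrow> g \<in> Vhom n \<Longrightarrow> \<eta> (f + g) = \<eta> f + \<eta> g"
    and "\<And>a f. f \<in> Vhom n \<Longrightarrow> \<eta> (smult [:a:] f) = a * \<eta> f"
    and "\<And>f. f \<notin> Vhom n \<Longrightarrow> \<eta> f = 0"
  shows "\<eta> \<in> Lambda n"
  using assms by (simp add: Lambda_def)

lemma Lambda_add: "\<eta> \<in> Lambda n \<Longrightarrow> \<xi> \<in> Lambda n \<Longrightarrow> \<eta> + \<xi> \<in> Lambda n"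
  by (rule Lambda_I) (simp_all add: lam_add lam_smult lam_out algebra_simps)
lemma Lambda_uminus: "\<eta> \<in> Lambda n \<Longrightarrow> - \<eta> \<in> Lambda n"
  by (rule Lambda_I) (simp_all add: lam_add lam_smult lam_out algebra_simps)
lemma Lambda_zero: "(0 :: 'k::field poly poly \<Rightarrow> 'k) \<in> Lambda n"
  by (rule Lambda_I) simp_all
lemma Lambda_diff: "\<eta> \<in> Lambda n \<Longrightarrow> \<xi> \<in> Lambda n \<Longrightarrow> \<eta> - \<xi> \<in> Lambda n"
  by (rule Lambda_I) (simp_all add: lam_add lam_smult lam_out algebra_simps)
lemma Lambda_scale: "\<eta> \<in> Lambda n \<Longrightarrow> (\<lambda>w. a * \<eta> w) \<in> Lambda n"
  by (rule Lambda_I) (simp_all add: lam_add lam_smult lam_out algebra_simps)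
lemma Lambda_sum: "(\<And>i. i \<in> A \<Longrightarrow> g i \<in> Lambda n) \<Longrightarrow> sum g A \<in> Lambda n"
  by (induction A rule: infinite_finite_induct) (simp_all add: Lambda_zero Lambda_add)

lemma act_Lambda: "\<eta> \<in> Lambda n \<Longrightarrow> act n t \<eta> \<in> Lambda n"
  by (rule Lambda_I) (simp_all add: act_apply Vhom_add Vhom_smult Vhom_Bt pcompose_add pcompose_smult lam_add lam_smult)

lemma act_0: "\<eta> \<in> Lambda n \<Longrightarrow> act n 0 \<eta> = \<eta>"
  by (rule ext) (simp add: act_apply Bt_0 pcompose_idR lam_out)

lemma act_act: "\<eta> \<in> Lambda n \<Longrightarrow> act n s (act n t \<eta>) = act n (s + t) \<eta>"
  by (rule ext) (simp add: act_apply Vhom_Bt pcompose_assoc[symmetric] Bt_comp)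

lemma act_plus: "act n t (\<eta> + \<xi>) = act n t \<eta> + act n t \<xi>"
  by (rule ext) (simp add: act_apply)
lemma act_uminus: "act n t (- \<eta>) = - act n t \<eta>"
  by (rule ext) (simp add: act_apply)
lemma act_minus: "act n t (\<eta> - \<xi>) = act n t \<eta> - act n t \<xi>"
  by (rule ext) (simp add: act_apply)
lemma act_zero: "act n t 0 = 0"
  by (rule ext) (simp add: act_apply)
lemma act_scale: "act n t (\<lambda>w. a * \<eta> w) = (\<lambda>w. a * act n t \<eta> w)"
  by (rule ext) (simp add: act_apply)
lemma act_sum: "act n t (sum g A) = (\<Sum>i\<in>A. act n t (g i))"
  by (rule ext) (simp add: act_apply sum_fun_apply)

lemma dl_Lambda: "dl n k \<in> Lambda n"
  by (rule Lambda_I) (simp_all add: dl_def Vhom_add Vhom_smult dc_def)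

lemma dl_fi: "i \<le> n \<Longrightarrow> k \<le> n \<Longrightarrow> dl n k (fi n i) = (if k = i then 1 else 0)"
  by (simp add: dl_def fi_Vhom dc_fi)

lemma lam_eqI: "\<eta> \<in> Lambda n \<Longrightarrow> \<xi> \<in> Lambda n \<Longrightarrow> (\<And>i. i \<le> n \<Longrightarrow> \<eta> (fi n i) = \<xi> (fi n i)) \<Longrightarrow> \<eta> = \<xi>"
proof (rule ext)
  fix w assume a: "\<eta> \<in> Lambda n" "\<xi> \<in> Lambda n" "\<And>i. i \<le> n \<Longrightarrow> \<eta> (fi n i) = \<xi> (fi n i)"
  show "\<eta> w = \<xi> w"
  proof (cases "w \<in> Vhom n")
    case True
    then show ?thesis using a by (simp add: lam_expand)
  next
    case False
    then show ?thesis using a by (simp add: lam_out)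
  qed
qed

lemma lam_expand_dl: "\<eta> \<in> Lambda n \<Longrightarrow> \<eta> = (\<Sum>k\<le>n. (\<lambda>w. \<eta> (fi n k) * dl n k w))"
proof (rule lam_eqI)
  assume "\<eta> \<in> Lambda n"
  show "(\<Sum>k\<le>n. (\<lambda>w. \<eta> (fi n k) * dl n k w)) \<in> Lambda n"
    by (intro Lambda_sum Lambda_scale dl_Lambda)
  fix i assume "i \<le> n"
  then show "\<eta> (fi n i) = (\<Sum>k\<le>n. (\<lambda>w. \<eta> (fi n k) * dl n k w)) (fi n i)"
    by (simp add: sum_fun_apply dl_fi if_distrib[where f="\<lambda>x. _ * x"] sum.delta cong: if_cong)
qed

lemma act_fi: "\<eta> \<in> Lambda n \<Longrightarrow> j \<le> n \<Longrightarrow>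
   act n t \<eta> (fi n j) = (\<Sum>i\<le>j. of_nat (j choose i) * (-t)^(j-i) * \<eta> (fi n i))"
proof -
  assume a: "\<eta> \<in> Lambda n" "j \<le> n"
  have "act n t \<eta> (fi n j) = (\<Sum>j'\<le>n. \<Sum>i\<le>j'. dc n j' (fi n j) * of_nat (j' choose i) * (-t)^(j'-i) * \<eta> (fi n i))"
    using a by (simp add: lam_act fi_Vhom)
  also have "\<dots> = (\<Sum>j'\<le>n. if j' = j then (\<Sum>i\<le>j'. of_nat (j' choose i) * (-t)^(j'-i) * \<eta> (fi n i)) else 0)"
    using a by (intro sum.cong refl) (simp add: dc_fi)
  also have "\<dots> = (\<Sum>i\<le>j. of_nat (j choose i) * (-t)^(j-i) * \<eta> (fi n i))"
    using a by (simp add: sum.delta')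
  finally show ?thesis .
qed

section \<open>The group\<close>

lemma S_carrier: "carrier (S_Lambda n :: ('k::{field,finite} \<times> _) monoid) = UNIV \<times> Lambda n"
  by (simp add: S_Lambda_def)
lemma S_one: "\<one>\<^bsub>S_Lambda n :: ('k::{field,finite} \<times> _) monoid\<^esub> = (0, 0)"
  by (simp add: S_Lambda_def zero_fun_def)
lemma S_mult: "(c1, \<eta>1) \<otimes>\<^bsub>S_Lambda n :: ('k::{field,finite} \<times> _) monoid\<^esub> (c2, \<eta>2) = (c1 + c2, act n c2 \<eta>1 + \<eta>2)"
  by (simp add: S_Lambda_def act_def plus_fun_def)

lemma group_S: "group (S_Lambda n :: ('k::{field,finite} \<times> _) monoid)"
proof (rule groupI)
  fix x y z :: "'k \<times> ('k poly poly \<Rightarrow> 'k)"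
  assume x: "x \<in> carrier (S_Lambda n)" and y: "y \<in> carrier (S_Lambda n)"
  then show "x \<otimes>\<^bsub>S_Lambda n\<^esub> y \<in> carrier (S_Lambda n)"
    by (cases x; cases y) (simp add: S_mult S_carrier Lambda_add act_Lambda)
  assume z: "z \<in> carrier (S_Lambda n)"
  show "x \<otimes>\<^bsub>S_Lambda n\<^esub> y \<otimes>\<^bsub>S_Lambda n\<^esub> z = x \<otimes>\<^bsub>S_Lambda n\<^esub> (y \<otimes>\<^bsub>S_Lambda n\<^esub> z)"
    using x y z by (cases x; cases y; cases z) (simp add: S_mult S_carrier act_plus act_act add_ac)
next
  show "\<one>\<^bsub>S_Lambda n\<^esub> \<in> carrier (S_Lambda n :: ('k \<times> _) monoid)"
    by (simp add: S_one S_carrier Lambda_zero)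
next
  fix x :: "'k \<times> ('k poly poly \<Rightarrow> 'k)"
  assume x: "x \<in> carrier (S_Lambda n)"
  then show "\<one>\<^bsub>S_Lambda n\<^esub> \<otimes>\<^bsub>S_Lambda n\<^esub> x = x"
    by (cases x) (simp add: S_one S_mult act_zero)
  obtain c \<eta> where xe: "x = (c, \<eta>)" by (cases x)
  with x have e: "\<eta> \<in> Lambda n" by (simp add: S_carrier)
  show "\<exists>y\<in>carrier (S_Lambda n). y \<otimes>\<^bsub>S_Lambda n\<^esub> x = \<one>\<^bsub>S_Lambda n\<^esub>"
  proof (rule bexI[of _ "(-c, - act n (-c) \<eta>)"])
    show "(-c, - act n (-c) \<eta>) \<otimes>\<^bsub>S_Lambda n\<^esub> x = \<one>\<^bsub>S_Lambda n\<^esub>"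
      using e by (simp add: xe S_mult S_one act_uminus act_act act_0)
    show "(-c, - act n (-c) \<eta>) \<in> carrier (S_Lambda n)"
      using e by (simp add: S_carrier Lambda_uminus act_Lambda)
  qed
qed

lemma S_inv: "\<eta> \<in> Lambda n \<Longrightarrow> inv\<^bsub>S_Lambda n :: ('k::{field,finite} \<times> _) monoid\<^esub> (c, \<eta>) = (-c, - act n (-c) \<eta>)"
  by (rule group.inv_equality[OF group_S])
     (simp_all add: S_mult S_one S_carrier act_uminus act_act act_0 Lambda_uminus act_Lambda)

lemma S_pow: "\<eta> \<in> Lambda n \<Longrightarrow> (c, \<eta>) [^]\<^bsub>S_Lambda n :: ('k::{field,finite} \<times> _) monoid\<^esub> (k::nat)
   = (of_nat k * c, \<Sum>i<k. act n (of_nat i * c) \<eta>)"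
proof (induction k)
  case 0 then show ?case by (simp add: S_one zero_fun_def)
next
  case (Suc k)
  have "(\<Sum>i<Suc k. act n (of_nat i * c) \<eta>) = act n 0 \<eta> + (\<Sum>i<k. act n (of_nat (Suc i) * c) \<eta>)"
    by (subst sum.lessThan_Suc_shift) simp
  also have "\<dots> = (\<Sum>i<k. act n c (act n (of_nat i * c) \<eta>)) + \<eta>"
    using Suc.prems by (simp add: act_act act_0 algebra_simps)
  finally show ?case using Suc by (simp add: S_mult act_sum algebra_simps) (simp add: plus_fun_def)
qed

section \<open>Characteristic p facts\<close>

lemma char_eq:
  assumes "Factorial_Ring.prime p" "card (UNIV :: 'k::{field,finite} set) = p ^ m"
  shows "CHAR('k) = p"
proof -
  have pos: "CHAR('k) > 0" by (rule finite_imp_CHAR_pos) simp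
  then have pr: "Factorial_Ring.prime CHAR('k)" by (rule prime_CHAR_semidom)
  have "CHAR('k) dvd p ^ m" using CHAR_dvd_CARD[where 'a='k] assms(2) by simp
  then have "CHAR('k) dvd p" using pr prime_dvd_power by blast
  then show ?thesis using pr assms(1) primes_dvd_imp_eq by blast
qed

lemma of_nat_mod_CHAR: "CHAR('k::field) = p \<Longrightarrow> (of_nat (x mod p) :: 'k) = of_nat x"
  by (simp add: of_nat_eq_iff_cong_CHAR cong_def)

lemma of_nat_p: assumes "CHAR('k::field) = p" shows "(of_nat p :: 'k) = 0"
  using of_nat_CHAR[where 'a='k] unfolding assms .

lemma fermat_k:
  assumes "CHAR('k::field) = p" "Factorial_Ring.prime p" "i < p" "i \<noteq> 0"
  shows "(of_nat i :: 'k) ^ (p - 1) = 1"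
proof -
  have "\<not> p dvd i" using assms by (auto dest: dvd_imp_le)
  then have "[i ^ (p - 1) = 1] (mod p)" using fermat_theorem assms(2) by blast
  then have "(of_nat (i ^ (p - 1)) :: 'k) = of_nat 1"
    unfolding of_nat_eq_iff_cong_CHAR assms(1) .
  then show ?thesis by simp
qed

lemma frob_k:
  assumes "CHAR('k::field) = p" "Factorial_Ring.prime p" "i < p"
  shows "(of_nat i :: 'k) ^ p = of_nat i"
proof (cases "i = 0")
  case True then show ?thesis using assms prime_gt_0_nat by auto
next
  case False
  have "p = Suc (p - 1)" using assms prime_gt_0_nat by simp
  then have "(of_nat i :: 'k) ^ p = of_nat i * of_nat i ^ (p - 1)"
    by (metis power_Suc)
  then show ?thesis using fermat_k[OF assms False] by simp
qed


lemma ps_pm1: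
  assumes "CHAR('k::field) = p" "Factorial_Ring.prime p"
  shows "(\<Sum>i<p. (of_nat i :: 'k) ^ (p - 1)) = -1"
proof -
  obtain p' where pp: "p = Suc p'" using assms prime_gt_0_nat by (cases p) auto
  have p'0: "p' > 0" using prime_gt_1_nat[OF assms(2)] pp by simp
  have "(\<Sum>i<p. (of_nat i :: 'k) ^ (p - 1)) = 0 ^ (p - 1) + (\<Sum>i<p'. (of_nat (Suc i) :: 'k) ^ (p - 1))"
    unfolding pp by (subst sum.lessThan_Suc_shift) simp
  also have "\<dots> = (\<Sum>i<p'. 1)"
  proof -
    have z: "(0::'k) ^ (p - 1) = 0" using p'0 pp by simp
    have "(\<Sum>i<p'. (of_nat (Suc i) :: 'k) ^ (p - 1)) = (\<Sum>i<p'. 1)"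
      by (rule sum.cong[OF refl]) (rule fermat_k[OF assms]; use pp in auto)
    then show ?thesis by (simp only: z add_0)
  qed
  also have "\<dots> = of_nat p'" by simp
  also have "\<dots> = of_nat p - 1" by (simp add: pp)
  also have "\<dots> = -1" using of_nat_p[OF assms(1)] by simp
  finally show ?thesis .
qed

lemma ps_mid:
  assumes "CHAR('k::field) = p" "Factorial_Ring.prime p" "1 \<le> k" "k < p - 1"
  shows "(\<Sum>i<p. (of_nat i :: 'k) ^ k) = 0"
proof -
  have "\<exists>r. 1 \<le> r \<and> r < p \<and> (of_nat r :: 'k) ^ k \<noteq> 1"
  proof (rule ccontr)
    assume "\<not> ?thesis"
    then have all: "\<And>r. 1 \<le> r \<Longrightarrow> r < p \<Longrightarrow> (of_nat r :: 'k) ^ k = 1" by blast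
    define P :: "'k poly" where "P = monom 1 k - 1"
    have degP: "degree P \<le> k" unfolding P_def by (intro degree_diff_le) (simp_all add: degree_monom_le)
    have "coeff P k = 1" using assms(3) unfolding P_def by simp
    then have P0: "P \<noteq> 0" by auto
    have sub: "of_nat ` {1..<p} \<subseteq> {x. poly P x = 0}"
      using all by (auto simp: P_def poly_monom)
    have inj: "inj_on (of_nat :: nat \<Rightarrow> 'k) {1..<p}"
      by (rule inj_onI) (use assms(1) in \<open>auto simp: of_nat_eq_iff_cong_CHAR cong_def\<close>)
    have "p - 1 = card (of_nat ` {1..<p} :: 'k set)" using card_image[OF inj] by simp
    also have "\<dots> \<le> card {x. poly P x = 0}"
      by (rule card_mono[OF _ sub]) (use poly_roots_finite P0 in blast)
    also have "\<dots> \<le> k" using card_poly_roots_bound[OF P0] degP by simp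
    finally show False using assms(4) by simp
  qed
  then obtain r where r: "1 \<le> r" "r < p" "(of_nat r :: 'k) ^ k \<noteq> 1" by blast
  define h where "h i = (r * i) mod p" for i
  have "\<not> p dvd r" using r by (auto dest: dvd_imp_le)
  then have cop: "coprime r p"
    using prime_imp_coprime[OF assms(2)] coprime_commute by blast
  have inj: "inj_on h {..<p}"
  proof (rule inj_onI)
    fix i j assume ij: "i \<in> {..<p}" "j \<in> {..<p}" "h i = h j"
    then have "[r * i = r * j] (mod p)" by (simp add: h_def cong_def)
    then have "[i = j] (mod p)" using cop by (simp add: cong_mult_lcancel_nat)
    then show "i = j" using ij by (simp add: cong_def)
  qed
  have img: "h ` {..<p} = {..<p}"
    by (rule endo_inj_surj[OF _ _ inj]) (use assms(2) prime_gt_0_nat in \<open>auto simp: h_def\<close>)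
  have bij: "bij_betw h {..<p} {..<p}" using inj img by (simp add: bij_betw_def)
  have "(\<Sum>i<p. (of_nat (h i) :: 'k) ^ k) = (\<Sum>i<p. (of_nat i :: 'k) ^ k)"
    by (rule sum.reindex_bij_betw[OF bij])
  moreover have "(\<Sum>i<p. (of_nat (h i) :: 'k) ^ k) = (of_nat r) ^ k * (\<Sum>i<p. (of_nat i :: 'k) ^ k)"
    by (simp add: h_def of_nat_mod_CHAR[OF assms(1)] power_mult_distrib sum_distrib_left)
  ultimately have "((of_nat r) ^ k - 1) * (\<Sum>i<p. (of_nat i :: 'k) ^ k) = 0"
    by (simp add: algebra_simps)
  then show ?thesis using r(3) by simp
qed

lemma ps_all:
  assumes "CHAR('k::field) = p" "Factorial_Ring.prime p" "odd p" "d \<le> p"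
  shows "(\<Sum>i<p. (of_nat i :: 'k) ^ d) = (if d = p - 1 then -1 else 0)"
proof -
  have p3: "p \<ge> 3" using assms(2,3) prime_gt_1_nat[OF assms(2)]
    by (metis One_nat_def Suc_1 Suc_leI antisym_conv2 even_numeral le_neq_implies_less linorder_not_le numeral_3_eq_3)
  consider "d = 0" | "1 \<le> d \<and> d < p - 1" | "d = p - 1" | "d = p" using assms(4) by linarith
  then show ?thesis
  proof cases
    case 1 then show ?thesis using assms p3 of_nat_p[OF assms(1)] by simp
  next
    case 2 then show ?thesis using ps_mid[OF assms(1,2)] by auto
  next
    case 3 then show ?thesis using ps_pm1[OF assms(1,2)] by simp
  next
    case 4
    have "(\<Sum>i<p. (of_nat i :: 'k) ^ p) = (\<Sum>i<p. (of_nat i :: 'k) ^ 1)"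
      by (intro sum.cong refl) (simp add: frob_k[OF assms(1,2)])
    also have "\<dots> = 0" using ps_mid[OF assms(1,2), of 1] p3 by simp
    finally show ?thesis using 4 p3 by simp
  qed
qed

section \<open>The p-th power\<close>

lemma act_dl_fi: "j \<le> n \<Longrightarrow> k \<le> n \<Longrightarrow>
  act n t (dl n k) (fi n j) = (if k \<le> j then of_nat (j choose k) * (-t)^(j-k) else 0)"
proof -
  assume a: "j \<le> n" "k \<le> n"
  have "act n t (dl n k) (fi n j) = (\<Sum>i\<le>j. of_nat (j choose i) * (-t)^(j-i) * dl n k (fi n i))"
    using a by (simp add: act_fi dl_Lambda)
  also have "\<dots> = (\<Sum>i\<le>j. if i = k then of_nat (j choose i) * (-t)^(j-i) else 0)"
    using a by (intro sum.cong refl) (auto simp: dl_fi)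
  also have "\<dots> = (if k \<le> j then of_nat (j choose k) * (-t)^(j-k) else 0)"
    by (simp add: sum.delta')
  finally show ?thesis .
qed

lemma act_fi0: "\<eta> \<in> Lambda n \<Longrightarrow> act n t \<eta> (fi n 0) = \<eta> (fi n 0)"
  by (simp add: act_fi)

lemma norm_sum:
  fixes c :: "'k::{field,finite}" and \<eta> :: "'k poly poly \<Rightarrow> 'k"
  assumes ch: "CHAR('k::{field,finite}) = p" and pr: "Factorial_Ring.prime p" and od: "odd p"
    and e: "\<eta> \<in> Lambda p"
  shows "(\<Sum>r<p. act p (of_nat r * c) \<eta>) = (\<lambda>w. - (c ^ (p - 1) * \<eta> (fi p 0)) * dl p (p - 1) w)"
proof (rule lam_eqI)
  show "(\<Sum>r<p. act p (of_nat r * c) \<eta>) \<in> Lambda p"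
    by (intro Lambda_sum act_Lambda e)
  show "(\<lambda>w. - (c ^ (p - 1) * \<eta> (fi p 0)) * dl p (p - 1) w) \<in> Lambda p"
    by (intro Lambda_scale dl_Lambda)
  fix j assume j: "j \<le> p"
  have p3: "p \<ge> 3" using pr od prime_gt_1_nat[OF pr]
    by (metis One_nat_def Suc_1 Suc_leI even_numeral le_neq_implies_less numeral_3_eq_3)
  define F where "F i = of_nat (j choose i) * (-c)^(j-i) * \<eta> (fi p i)" for i
  have "(\<Sum>r<p. act p (of_nat r * c) \<eta>) (fi p j)
      = (\<Sum>r<p. \<Sum>i\<le>j. of_nat (j choose i) * (-(of_nat r * c))^(j-i) * \<eta> (fi p i))"
    using e j by (simp add: sum_fun_apply act_fi)
  also have "\<dots> = (\<Sum>i\<le>j. \<Sum>r<p. F i * (of_nat r)^(j-i))"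
  proof -
    have pw: "\<And>x e. (-(x * c)) ^ e = (-c) ^ e * x ^ e"
      by (metis mult.commute mult_minus_left power_mult_distrib)
    have pw2: "\<And>x e. (-(c * x)) ^ e = (-c) ^ e * x ^ e"
      by (metis mult_minus_left power_mult_distrib)
    show ?thesis by (subst sum.swap) (simp add: F_def pw pw2 mult_ac)
  qed
  also have "\<dots> = (\<Sum>i\<le>j. F i * (\<Sum>r<p. (of_nat r :: 'k)^(j-i)))"
    by (simp add: sum_distrib_left)
  also have "\<dots> = (\<Sum>i\<le>j. F i * (if j - i = p - 1 then -1 else 0))"
    using j by (intro sum.cong refl) (simp add: ps_all[OF ch pr od])
  also have "\<dots> = (- (c ^ (p - 1) * \<eta> (fi p 0))) * dl p (p - 1) (fi p j)"
  proof -
    consider "j < p - 1" | "j = p - 1" | "j = p" using j by linarith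
    then show ?thesis
    proof cases
      case 1
      then have "\<And>i. i \<le> j \<Longrightarrow> j - i \<noteq> p - 1" by auto
      then show ?thesis using 1 j by (simp add: dl_fi)
    next
      case 2
      have "(\<Sum>i\<le>j. F i * (if j - i = p - 1 then -1 else 0)) = (\<Sum>i\<le>j. if i = 0 then - F i else 0)"
        using 2 by (intro sum.cong refl) auto
      also have "\<dots> = - F 0" by (simp add: sum.delta)
      also have "\<dots> = - (c ^ (p - 1) * \<eta> (fi p 0))"
        using 2 od by (simp add: F_def)
      finally show ?thesis using 2 p3 by (simp add: dl_fi)
    next
      case 3
      have "(\<Sum>i\<le>j. F i * (if j - i = p - 1 then -1 else 0)) = (\<Sum>i\<le>j. if i = 1 then - F i else 0)"
        using 3 p3 by (intro sum.cong refl) auto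
      also have "\<dots> = - F 1" using 3 p3 by (simp add: sum.delta)
      also have "\<dots> = 0" using 3 of_nat_p[OF ch] by (simp add: F_def)
      finally show ?thesis using 3 p3 by (simp add: dl_fi)
    qed
  qed
  finally show "(\<Sum>r<p. act p (of_nat r * c) \<eta>) (fi p j) = (\<lambda>w. - (c ^ (p - 1) * \<eta> (fi p 0)) * dl p (p - 1) w) (fi p j)"
    by simp
qed

lemma pow_p:
  assumes ch: "CHAR('k::{field,finite}) = p" and pr: "Factorial_Ring.prime p" and od: "odd p"
    and e: "\<eta> \<in> Lambda p"
  shows "(c, \<eta>) [^]\<^bsub>S_Lambda p :: ('k \<times> _) monoid\<^esub> p = \<one>\<^bsub>S_Lambda p :: ('k \<times> _) monoid\<^esub>
     \<longleftrightarrow> c = 0 \<or> \<eta> (fi p 0) = 0"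
proof -
  have p1: "p \<ge> 1" using prime_gt_0_nat[OF pr] by simp
  have "(c, \<eta>) [^]\<^bsub>S_Lambda p :: ('k \<times> _) monoid\<^esub> p = (0, (\<lambda>w. - (c ^ (p - 1) * \<eta> (fi p 0)) * dl p (p - 1) w))"
    using e by (simp add: S_pow norm_sum[OF ch pr od e] of_nat_p[OF ch])
  moreover have "(\<lambda>w. - (c ^ (p - 1) * \<eta> (fi p 0)) * dl p (p - 1) w) = 0 \<longleftrightarrow> c = 0 \<or> \<eta> (fi p 0) = 0"
  proof
    assume "(\<lambda>w. - (c ^ (p - 1) * \<eta> (fi p 0)) * dl p (p - 1) w) = 0"
    then have "- (c ^ (p - 1) * \<eta> (fi p 0)) * dl p (p - 1) (fi p (p - 1)) = 0"
      by (metis zero_fun_def)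
    then show "c = 0 \<or> \<eta> (fi p 0) = 0" using prime_gt_1_nat[OF pr] by (simp add: dl_fi)
  next
    assume "c = 0 \<or> \<eta> (fi p 0) = 0"
    moreover have "p - 1 \<noteq> 0" using prime_gt_1_nat[OF pr] by simp
    ultimately show "(\<lambda>w. - (c ^ (p - 1) * \<eta> (fi p 0)) * dl p (p - 1) w) = 0"
      by (auto simp: zero_fun_def)
  qed
  ultimately show ?thesis by (simp add: S_one)
qed

section \<open>Kernels\<close>

lemma kernel2_normal:
  fixes G (structure) and f g :: "'a \<Rightarrow> 'b::ab_group_add"
  assumes grp: "group G"
    and hf: "\<And>x y. x \<in> carrier G \<Longrightarrow> y \<in> carrier G \<Longrightarrow> f (x \<otimes> y) = f x + f y"
    and hg: "\<And>x y. x \<in> carrier G \<Longrightarrow> y \<in> carrier G \<Longrightarrow> g (x \<otimes> y) = g x + g y"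
  shows "{x \<in> carrier G. f x = 0 \<and> g x = 0} \<lhd> G"
proof -
  interpret group G by (rule grp)
  have f1: "f \<one> = 0" using hf[of \<one> \<one>] by simp
  have g1: "g \<one> = 0" using hg[of \<one> \<one>] by simp
  have fi: "f (inv x) = - f x" if "x \<in> carrier G" for x
    using hf[of "inv x" x] that f1 by (simp add: eq_neg_iff_add_eq_0)
  have gi: "g (inv x) = - g x" if "x \<in> carrier G" for x
    using hg[of "inv x" x] that g1 by (simp add: eq_neg_iff_add_eq_0)
  have sg: "subgroup {x \<in> carrier G. f x = 0 \<and> g x = 0} G"
    by (rule subgroupI) (auto simp: hf hg fi gi f1 g1 intro!: exI[of _ \<one>])
  show ?thesis unfolding normal_inv_iff
    using sg by (auto simp: hf hg fi gi)
qed

lemma fst_hom: "x \<in> carrier (S_Lambda n) \<Longrightarrow> y \<in> carrier (S_Lambda n) \<Longrightarrow>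
   fst (x \<otimes>\<^bsub>S_Lambda n :: ('k::{field,finite} \<times> _) monoid\<^esub> y) = fst x + fst y"
  by (cases x; cases y) (simp add: S_mult)

lemma ev0_hom: "x \<in> carrier (S_Lambda n) \<Longrightarrow> y \<in> carrier (S_Lambda n) \<Longrightarrow>
   snd (x \<otimes>\<^bsub>S_Lambda n :: ('k::{field,finite} \<times> _) monoid\<^esub> y) (fi n 0) = snd x (fi n 0) + snd y (fi n 0)"
  by (cases x; cases y) (simp add: S_mult S_carrier act_fi0)


definition Mset :: "nat \<Rightarrow> ('k::{field,finite} \<times> ('k poly poly \<Rightarrow> 'k)) set" where
  "Mset n = {x \<in> carrier (S_Lambda n). snd x (fi n 0) = 0 \<and> (\<lambda>_. 0::'k) x = 0}"
definition Kset :: "nat \<Rightarrow> ('k::{field,finite} \<times> ('k poly poly \<Rightarrow> 'k)) set" where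
  "Kset n = {x \<in> carrier (S_Lambda n). fst x = 0 \<and> snd x (fi n 0) = 0}"

lemma V_sub_eq: "V_sub n = {x \<in> carrier (S_Lambda n :: ('k::{field,finite} \<times> _) monoid). fst x = 0 \<and> (\<lambda>_. 0::'k) x = 0}"
  by (auto simp: V_sub_def S_carrier)

lemma V_normal: "V_sub n \<lhd> (S_Lambda n :: ('k::{field,finite} \<times> _) monoid)"
  unfolding V_sub_eq by (rule kernel2_normal[OF group_S]) (simp_all add: fst_hom)
lemma M_normal: "Mset n \<lhd> (S_Lambda n :: ('k::{field,finite} \<times> _) monoid)"
  unfolding Mset_def by (rule kernel2_normal[OF group_S]) (simp_all add: ev0_hom)
lemma K_normal: "Kset n \<lhd> (S_Lambda n :: ('k::{field,finite} \<times> _) monoid)"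
  unfolding Kset_def by (rule kernel2_normal[OF group_S]) (simp_all add: ev0_hom fst_hom)

lemma Mset_eq: "Mset n = UNIV \<times> {\<eta> \<in> Lambda n. \<eta> (fi n 0) = 0}"
  by (auto simp: Mset_def S_carrier)

section \<open>Cardinalities\<close>

lemma card_Lambda: "card (Lambda n :: ('k::{field,finite} poly poly \<Rightarrow> 'k) set) = card (UNIV :: 'k set) ^ (n + 1)"
proof -
  define h :: "('k poly poly \<Rightarrow> 'k) \<Rightarrow> nat \<Rightarrow> 'k" where "h \<eta> = restrict (\<lambda>i. \<eta> (fi n i)) {..n}" for \<eta>
  have inj: "inj_on h (Lambda n)"
  proof (rule inj_onI)
    fix \<eta> \<xi> assume a: "\<eta> \<in> Lambda n" "\<xi> \<in> Lambda n" "h \<eta> = h \<xi>"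
    show "\<eta> = \<xi>"
    proof (rule lam_eqI[OF a(1,2)])
      fix i assume "i \<le> n"
      then show "\<eta> (fi n i) = \<xi> (fi n i)" using fun_cong[OF a(3), of i] by (simp add: h_def)
    qed
  qed
  have img: "h ` Lambda n = PiE {..n} (\<lambda>_. UNIV)"
  proof
    show "h ` Lambda n \<subseteq> PiE {..n} (\<lambda>_. UNIV)" by (auto simp: h_def restrict_PiE_iff split: if_splits)
    show "PiE {..n} (\<lambda>_. UNIV) \<subseteq> h ` Lambda n"
    proof
      fix a assume a: "a \<in> PiE {..n} (\<lambda>_. (UNIV :: 'k set))"
      define \<eta> where "\<eta> = (\<Sum>k\<le>n. (\<lambda>w. a k * dl n k w))"
      have e: "\<eta> \<in> Lambda n" unfolding \<eta>_def by (intro Lambda_sum Lambda_scale dl_Lambda)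
      have "h \<eta> = a"
      proof (rule ext)
        fix i show "h \<eta> i = a i"
        proof (cases "i \<le> n")
          case True
          have "\<eta> (fi n i) = (\<Sum>k\<le>n. if k = i then a k else 0)"
            unfolding \<eta>_def sum_fun_apply using True by (intro sum.cong refl) (simp add: dl_fi)
          then show ?thesis using True by (simp add: h_def)
        next
          case False then show ?thesis using a by (auto simp: h_def PiE_def extensional_def)
        qed
      qed
      then show "a \<in> h ` Lambda n" using e by blast
    qed
  qed
  have "card (Lambda n :: ('k poly poly \<Rightarrow> 'k) set) = card (PiE {..n} (\<lambda>_. (UNIV :: 'k set)))"
    using card_image[OF inj] img by simp
  also have "\<dots> = card (UNIV :: 'k set) ^ (n + 1)" by (simp add: card_PiE)
  finally show ?thesis .
qed

lemma card_W: "card {\<eta> \<in> (Lambda n :: ('k::{field,finite} poly poly \<Rightarrow> 'k) set). \<eta> (fi n 0) = 0} = card (UNIV :: 'k set) ^ n"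
proof -
  define h :: "('k poly poly \<Rightarrow> 'k) \<Rightarrow> nat \<Rightarrow> 'k" where "h \<eta> = restrict (\<lambda>i. \<eta> (fi n i)) {1..n}" for \<eta>
  let ?W = "{\<eta> \<in> (Lambda n :: ('k poly poly \<Rightarrow> 'k) set). \<eta> (fi n 0) = 0}"
  have inj: "inj_on h ?W"
  proof (rule inj_onI)
    fix \<eta> \<xi> assume a: "\<eta> \<in> ?W" "\<xi> \<in> ?W" "h \<eta> = h \<xi>"
    show "\<eta> = \<xi>"
    proof (rule lam_eqI)
      show "\<eta> \<in> Lambda n" "\<xi> \<in> Lambda n" using a by auto
      fix i assume "i \<le> n"
      then show "\<eta> (fi n i) = \<xi> (fi n i)" using fun_cong[OF a(3), of i] a(1,2)
        by (cases "i = 0") (auto simp: h_def)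
    qed
  qed
  have img: "h ` ?W = PiE {1..n} (\<lambda>_. UNIV)"
  proof
    show "h ` ?W \<subseteq> PiE {1..n} (\<lambda>_. UNIV)" by (auto simp: h_def restrict_PiE_iff)
    show "PiE {1..n} (\<lambda>_. UNIV) \<subseteq> h ` ?W"
    proof
      fix a assume a: "a \<in> PiE {1..n} (\<lambda>_. (UNIV :: 'k set))"
      define \<eta> where "\<eta> = (\<Sum>k\<in>{1..n}. (\<lambda>w. a k * dl n k w))"
      have e: "\<eta> \<in> Lambda n" unfolding \<eta>_def by (intro Lambda_sum Lambda_scale dl_Lambda)
      have vals: "\<eta> (fi n i) = (if 1 \<le> i then a i else 0)" if "i \<le> n" for i
      proof -
        have "\<eta> (fi n i) = (\<Sum>k\<in>{1..n}. if k = i then a k else 0)"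
          unfolding \<eta>_def sum_fun_apply using that by (intro sum.cong refl) (simp add: dl_fi)
        then show ?thesis using that by (simp add: sum.delta)
      qed
      have "h \<eta> = a"
      proof (rule ext)
        fix i show "h \<eta> i = a i"
        proof (cases "1 \<le> i \<and> i \<le> n")
          case True
          then show ?thesis using vals[of i] by (simp add: h_def)
        next
          case False then show ?thesis using a by (auto simp: h_def PiE_def extensional_def)
        qed
      qed
      moreover have "\<eta> \<in> ?W" using e vals[of 0] by simp
      ultimately show "a \<in> h ` ?W" by blast
    qed
  qed
  have "card ?W = card (PiE {1..n} (\<lambda>_. (UNIV :: 'k set)))"
    using card_image[OF inj] img by simp
  also have "\<dots> = card (UNIV :: 'k set) ^ n" by (simp add: card_PiE)
  finally show ?thesis .
qed

lemma card_carrier: "card (carrier (S_Lambda n :: ('k::{field,finite} \<times> _) monoid)) = card (UNIV :: 'k set) ^ (n + 2)"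
  by (simp add: S_carrier card_cartesian_product card_Lambda)

lemma card_V: "card (V_sub n :: ('k::{field,finite} \<times> _) set) = card (UNIV :: 'k set) ^ (n + 1)"
proof -
  have A: "V_sub n = (\<lambda>\<eta>. (0::'k, \<eta>)) ` Lambda n" by (auto simp: V_sub_def)
  have B: "inj_on (\<lambda>\<eta>. (0::'k, \<eta>)) (Lambda n)" by (rule inj_onI) simp
  have "card (V_sub n :: ('k \<times> _) set) = card (Lambda n :: ('k poly poly \<Rightarrow> 'k) set)"
    unfolding A by (rule card_image[OF B])
  then show ?thesis by (simp add: card_Lambda)
qed

lemma card_M: "card (Mset n :: ('k::{field,finite} \<times> _) set) = card (UNIV :: 'k set) ^ (n + 1)"
  by (simp add: Mset_eq card_cartesian_product card_W)

section \<open>Exponents\<close>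

lemma has_exp_I:
  assumes ch: "CHAR('k::{field,finite}) = p" and pr: "Factorial_Ring.prime p"
    and sub: "N \<subseteq> carrier (S_Lambda p :: ('k \<times> _) monoid)"
    and all: "\<And>x. x \<in> N \<Longrightarrow> x [^]\<^bsub>S_Lambda p :: ('k \<times> _) monoid\<^esub> p = \<one>\<^bsub>S_Lambda p :: ('k \<times> _) monoid\<^esub>"
    and wit: "(0, dl p 1) \<in> N"
  shows "has_exponent (S_Lambda p :: ('k \<times> _) monoid) N p"
  unfolding has_exponent_def
proof (intro conjI allI impI ballI)
  show "0 < p" using prime_gt_0_nat[OF pr] .
  fix x assume "x \<in> N" then show "x [^]\<^bsub>S_Lambda p\<^esub> p = \<one>\<^bsub>S_Lambda p\<^esub>" by (rule all)
next
  fix k :: nat assume k: "0 < k \<and> (\<forall>x\<in>N. x [^]\<^bsub>S_Lambda p :: ('k \<times> _) monoid\<^esub> k = \<one>\<^bsub>S_Lambda p :: ('k \<times> _) monoid\<^esub>)"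
  then have "(0::'k, dl p 1) [^]\<^bsub>S_Lambda p :: ('k \<times> _) monoid\<^esub> k = \<one>\<^bsub>S_Lambda p :: ('k \<times> _) monoid\<^esub>"
    using wit by blast
  then have "(\<Sum>i<k. act p (of_nat i * (0::'k)) (dl p 1)) = (0 :: 'k poly poly \<Rightarrow> 'k)"
    by (simp add: S_pow dl_Lambda S_one)
  then have "(\<Sum>i<k. dl p 1) = (0 :: 'k poly poly \<Rightarrow> 'k)"
    by (simp add: act_0 dl_Lambda)
  then have "(\<Sum>i<k. dl p 1) (fi p 1) = (0 :: 'k)" by simp
  then have "(of_nat k :: 'k) = 0"
    using prime_gt_0_nat[OF pr] by (simp add: sum_fun_apply dl_fi)
  then have "p dvd k" using ch by (simp add: of_nat_eq_0_iff_char_dvd)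
  then show "p \<le> k" using k by (simp add: dvd_imp_le)
qed

lemma exp_V:
  assumes ch: "CHAR('k::{field,finite}) = p" and pr: "Factorial_Ring.prime p" and od: "odd p"
  shows "has_exponent (S_Lambda p :: ('k \<times> _) monoid) (V_sub p) p"
proof (rule has_exp_I[OF ch pr])
  show "V_sub p \<subseteq> carrier (S_Lambda p :: ('k \<times> _) monoid)" by (auto simp: V_sub_def S_carrier)
  show "(0, dl p 1) \<in> (V_sub p :: ('k \<times> _) set)" by (auto simp: V_sub_def dl_Lambda)
  fix x assume "x \<in> (V_sub p :: ('k \<times> _) set)"
  then obtain \<eta> where "x = (0, \<eta>)" "\<eta> \<in> Lambda p" by (auto simp: V_sub_def)
  then show "x [^]\<^bsub>S_Lambda p :: ('k \<times> _) monoid\<^esub> p = \<one>\<^bsub>S_Lambda p :: ('k \<times> _) monoid\<^esub>"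
    using pow_p[OF ch pr od] by simp
qed

lemma exp_M:
  assumes ch: "CHAR('k::{field,finite}) = p" and pr: "Factorial_Ring.prime p" and od: "odd p"
  shows "has_exponent (S_Lambda p :: ('k \<times> _) monoid) (Mset p) p"
proof (rule has_exp_I[OF ch pr])
  show "Mset p \<subseteq> carrier (S_Lambda p :: ('k \<times> _) monoid)" by (auto simp: Mset_def)
  have "p \<noteq> 0" using prime_gt_0_nat[OF pr] by simp
  then show "(0, dl p 1) \<in> (Mset p :: ('k \<times> _) set)"
    using prime_gt_0_nat[OF pr] by (auto simp: Mset_eq dl_Lambda dl_fi)
  fix x assume "x \<in> (Mset p :: ('k \<times> _) set)"
  then obtain c \<eta> where "x = (c, \<eta>)" "\<eta> \<in> Lambda p" "\<eta> (fi p 0) = 0" by (auto simp: Mset_eq)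
  then show "x [^]\<^bsub>S_Lambda p :: ('k \<times> _) monoid\<^esub> p = \<one>\<^bsub>S_Lambda p :: ('k \<times> _) monoid\<^esub>"
    using pow_p[OF ch pr od] by simp
qed

section \<open>Uniqueness\<close>

lemma subset_V_or_M:
  assumes ch: "CHAR('k::{field,finite}) = p" and pr: "Factorial_Ring.prime p" and od: "odd p"
    and sg: "subgroup N (S_Lambda p :: ('k \<times> _) monoid)"
    and ex: "\<And>x. x \<in> N \<Longrightarrow> x [^]\<^bsub>S_Lambda p :: ('k \<times> _) monoid\<^esub> p = \<one>\<^bsub>S_Lambda p :: ('k \<times> _) monoid\<^esub>"
  shows "N \<subseteq> V_sub p \<or> N \<subseteq> Mset p"
proof (cases "\<exists>x\<in>N. fst x \<noteq> 0")
  case False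
  then have "N \<subseteq> V_sub p" using subgroup.subset[OF sg] by (force simp: V_sub_def S_carrier)
  then show ?thesis by blast
next
  case True
  then obtain c \<eta> where x: "(c, \<eta>) \<in> N" "c \<noteq> 0" by auto
  have xc: "\<eta> \<in> Lambda p" using x subgroup.subset[OF sg] by (auto simp: S_carrier)
  have e0: "\<eta> (fi p 0) = 0" using ex[OF x(1)] pow_p[OF ch pr od xc] x(2) by simp
  have "N \<subseteq> Mset p"
  proof
    fix y assume y: "y \<in> N"
    obtain d \<xi> where yd: "y = (d, \<xi>)" by (cases y)
    have yc: "\<xi> \<in> Lambda p" using y yd subgroup.subset[OF sg] by (auto simp: S_carrier)
    have "\<xi> (fi p 0) = 0"
    proof (cases "d = 0")
      case False
      then show ?thesis using ex[OF y] pow_p[OF ch pr od yc] yd by simp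
    next
      case True
      have "(c, \<eta>) \<otimes>\<^bsub>S_Lambda p\<^esub> y \<in> N" using x(1) y subgroup.m_closed[OF sg] by blast
      then have "(c, \<eta> + \<xi>) \<in> N" using True yd xc by (simp add: S_mult act_0)
      then have "(\<eta> + \<xi>) (fi p 0) = 0"
        using ex pow_p[OF ch pr od] x(2) Lambda_add[OF xc yc] by metis
      then show ?thesis using e0 by simp
    qed
    then show "y \<in> Mset p" using yd yc by (simp add: Mset_eq)
  qed
  then show ?thesis by blast
qed




section \<open>The commutator subgroup\<close>

lemma comm_hom_zero:
  fixes G (structure) and f :: "'a \<Rightarrow> 'b::ab_group_add"
  assumes grp: "group G"
    and hf: "\<And>x y. x \<in> carrier G \<Longrightarrow> y \<in> carrier G \<Longrightarrow> f (x \<otimes> y) = f x + f y"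
    and a: "a \<in> carrier G" and b: "b \<in> carrier G"
  shows "f (a \<otimes> b \<otimes> inv a \<otimes> inv b) = 0"
proof -
  interpret group G by (rule grp)
  have f1: "f \<one> = 0" using hf[of \<one> \<one>] by simp
  have fi: "f (inv x) = - f x" if "x \<in> carrier G" for x
    using hf[of "inv x" x] that f1 by (simp add: eq_neg_iff_add_eq_0)
  show ?thesis using a b by (simp add: hf fi)
qed

definition gens :: "nat \<Rightarrow> ('k::{field,finite} \<times> ('k poly poly \<Rightarrow> 'k)) set" where
  "gens n = {a \<otimes>\<^bsub>S_Lambda n\<^esub> b \<otimes>\<^bsub>S_Lambda n\<^esub> inv\<^bsub>S_Lambda n\<^esub> a \<otimes>\<^bsub>S_Lambda n\<^esub> inv\<^bsub>S_Lambda n\<^esub> b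
      | a b. a \<in> V_sub n \<and> b \<in> carrier (S_Lambda n)}"

lemma comm_sub_gens: "comm_sub (S_Lambda n) (V_sub n) (carrier (S_Lambda n)) = generate (S_Lambda n) (gens n)"
  by (simp add: comm_sub_def gens_def)

lemma gens_carrier: "gens n \<subseteq> carrier (S_Lambda n :: ('k::{field,finite} \<times> _) monoid)"
proof -
  interpret group "S_Lambda n :: ('k \<times> _) monoid" by (rule group_S)
  show ?thesis
  proof
    fix x :: "'k \<times> _" assume "x \<in> gens n"
    then obtain a b where ab: "a \<in> V_sub n" "b \<in> carrier (S_Lambda n)"
      "x = a \<otimes>\<^bsub>S_Lambda n\<^esub> b \<otimes>\<^bsub>S_Lambda n\<^esub> inv\<^bsub>S_Lambda n\<^esub> a \<otimes>\<^bsub>S_Lambda n\<^esub> inv\<^bsub>S_Lambda n\<^esub> b"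
      unfolding gens_def by blast
    have ac: "a \<in> carrier (S_Lambda n)" using ab(1) by (auto simp: V_sub_def S_carrier)
    show "x \<in> carrier (S_Lambda n)" using ab ac by simp
  qed
qed

lemma gens_K: "gens n \<subseteq> (Kset n :: ('k::{field,finite} \<times> _) set)"
proof
  interpret group "S_Lambda n :: ('k \<times> _) monoid" by (rule group_S)
  fix x :: "'k \<times> _" assume "x \<in> gens n"
  then obtain a b where ab: "a \<in> V_sub n" "b \<in> carrier (S_Lambda n)"
    "x = a \<otimes>\<^bsub>S_Lambda n\<^esub> b \<otimes>\<^bsub>S_Lambda n\<^esub> inv\<^bsub>S_Lambda n\<^esub> a \<otimes>\<^bsub>S_Lambda n\<^esub> inv\<^bsub>S_Lambda n\<^esub> b"
    unfolding gens_def by blast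
  have ac: "a \<in> carrier (S_Lambda n)" using ab(1) by (auto simp: V_sub_def S_carrier)
  have "fst x = 0" unfolding ab(3) using comm_hom_zero[of "S_Lambda n" fst, OF group_S fst_hom ac ab(2)] .
  moreover have "snd x (fi n 0) = 0" unfolding ab(3)
    using comm_hom_zero[of "S_Lambda n" "\<lambda>x. snd x (fi n 0)", OF group_S ev0_hom ac ab(2)] by simp
  moreover have "x \<in> carrier (S_Lambda n)" using ab ac by simp
  ultimately show "x \<in> Kset n" by (simp add: Kset_def)
qed

lemma comm_sub_K: "comm_sub (S_Lambda n) (V_sub n) (carrier (S_Lambda n)) \<subseteq> (Kset n :: ('k::{field,finite} \<times> _) set)"
  unfolding comm_sub_gens
  by (rule group.generate_subgroup_incl[OF group_S gens_K normal_imp_subgroup[OF K_normal]])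

definition Hs :: "nat \<Rightarrow> ('k::{field,finite} poly poly \<Rightarrow> 'k) set" where
  "Hs n = {\<eta>. (0, \<eta>) \<in> generate (S_Lambda n) (gens n)}"

lemma Hs_Lambda: "\<eta> \<in> Hs n \<Longrightarrow> \<eta> \<in> Lambda n"
  using group.generate_incl[OF group_S gens_carrier] by (auto simp: Hs_def S_carrier)

lemma Hs_0: "0 \<in> Hs n"
  using generate.one[of "S_Lambda n" "gens n"] by (simp add: Hs_def S_one)

lemma Hs_add: "\<eta> \<in> Hs n \<Longrightarrow> \<xi> \<in> Hs n \<Longrightarrow> \<eta> + \<xi> \<in> Hs n"
  using generate.eng[of "(0, \<eta>)" "S_Lambda n" "gens n" "(0, \<xi>)"]
  by (simp add: Hs_def S_mult act_0 Hs_Lambda)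

lemma Hs_neg: "\<eta> \<in> Hs n \<Longrightarrow> - \<eta> \<in> Hs n"
  using group.generate_m_inv_closed[OF group_S gens_carrier, of "(0, \<eta>)" n]
  by (simp add: Hs_def S_inv act_0 Hs_Lambda)

lemma Hs_D:
  fixes \<xi> :: "'k::{field,finite} poly poly \<Rightarrow> 'k"
  assumes "\<xi> \<in> Lambda n"
  shows "act n t \<xi> - \<xi> \<in> Hs n"
proof -
  have a: "(0, - \<xi>) \<in> V_sub n" using assms by (simp add: V_sub_def Lambda_uminus)
  have b: "(-t, 0) \<in> carrier (S_Lambda n :: ('k \<times> _) monoid)" by (simp add: S_carrier Lambda_zero)
  have "(0::'k, - \<xi>) \<otimes>\<^bsub>S_Lambda n\<^esub> (-t, 0) \<otimes>\<^bsub>S_Lambda n\<^esub> inv\<^bsub>S_Lambda n\<^esub> (0, - \<xi>)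
      \<otimes>\<^bsub>S_Lambda n\<^esub> inv\<^bsub>S_Lambda n\<^esub> (-t, 0) \<in> gens n"
    unfolding gens_def using a b by blast
  moreover have "(0::'k, - \<xi>) \<otimes>\<^bsub>S_Lambda n\<^esub> (-t, 0) \<otimes>\<^bsub>S_Lambda n\<^esub> inv\<^bsub>S_Lambda n\<^esub> (0, - \<xi>)
      \<otimes>\<^bsub>S_Lambda n\<^esub> inv\<^bsub>S_Lambda n\<^esub> (-t, 0) = (0, act n t \<xi> - \<xi>)"
  proof -
    have mx: "- \<xi> \<in> Lambda n" using assms by (rule Lambda_uminus)
    have i1: "inv\<^bsub>S_Lambda n\<^esub> (0::'k, - \<xi>) = (0, \<xi>)"
      using S_inv[OF mx, of 0] act_0[OF mx] by simp
    have i2: "inv\<^bsub>S_Lambda n\<^esub> (-t, 0::'k poly poly \<Rightarrow> 'k) = (t, 0)"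
      using S_inv[OF Lambda_zero, of n "-t"] by (simp add: act_zero)
    have m1: "(0::'k, - \<xi>) \<otimes>\<^bsub>S_Lambda n\<^esub> (-t, 0) = (-t, - act n (-t) \<xi>)"
      by (simp add: S_mult act_uminus)
    have m2: "(-t, - act n (-t) \<xi>) \<otimes>\<^bsub>S_Lambda n\<^esub> (0, \<xi>) = (-t, \<xi> - act n (-t) \<xi>)"
    proof -
      have "- act n (-t) \<xi> \<in> Lambda n" using assms by (intro Lambda_uminus act_Lambda)
      then have "act n 0 (- act n (-t) \<xi>) = - act n (-t) \<xi>" by (rule act_0)
      then show ?thesis by (simp add: S_mult)
    qed
    have m3: "(-t, \<xi> - act n (-t) \<xi>) \<otimes>\<^bsub>S_Lambda n\<^esub> (t, 0) = (0, act n t \<xi> - \<xi>)"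
    proof -
      have "act n t (act n (-t) \<xi>) = \<xi>" using assms by (simp add: act_act act_0)
      then show ?thesis by (simp add: S_mult act_minus)
    qed
    show ?thesis by (simp only: i1 i2 m1 m2 m3)
  qed
  ultimately have "(0, act n t \<xi> - \<xi>) \<in> gens n" by simp
  then have "(0, act n t \<xi> - \<xi>) \<in> generate (S_Lambda n) (gens n)" by (rule generate.incl)
  then show ?thesis unfolding Hs_def by simp
qed

definition Ls :: "nat \<Rightarrow> ('k::{field,finite} poly poly \<Rightarrow> 'k) set" where
  "Ls n = {\<eta> \<in> Lambda n. \<forall>s. (\<lambda>w. s * \<eta> w) \<in> Hs n}"

lemma Ls_add: "\<eta> \<in> Ls n \<Longrightarrow> \<xi> \<in> Ls n \<Longrightarrow> \<eta> + \<xi> \<in> Ls n"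
proof -
  assume a: "\<eta> \<in> Ls n" "\<xi> \<in> Ls n"
  have "(\<lambda>w. s * (\<eta> + \<xi>) w) = (\<lambda>w. s * \<eta> w) + (\<lambda>w. s * \<xi> w)" for s
    by (simp add: fun_eq_iff algebra_simps)
  then show ?thesis using a by (auto simp: Ls_def Lambda_add Hs_add)
qed

lemma Ls_scale: "\<eta> \<in> Ls n \<Longrightarrow> (\<lambda>w. a * \<eta> w) \<in> Ls n"
proof -
  assume a: "\<eta> \<in> Ls n"
  have "(\<lambda>w. s * (a * \<eta> w)) = (\<lambda>w. (s * a) * \<eta> w)" for s by (simp add: mult.assoc)
  then show ?thesis using a by (auto simp: Ls_def Lambda_scale)
qed

lemma Ls_diff: "\<eta> \<in> Ls n \<Longrightarrow> \<xi> \<in> Ls n \<Longrightarrow> \<eta> - \<xi> \<in> Ls n"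
proof -
  assume a: "\<eta> \<in> Ls n" "\<xi> \<in> Ls n"
  have "\<eta> - \<xi> = \<eta> + (\<lambda>w. (-1) * \<xi> w)" by (simp add: fun_eq_iff)
  then show ?thesis using a Ls_add Ls_scale by metis
qed

lemma Ls_0: "0 \<in> Ls n"
proof -
  have "(\<lambda>w. s * (0::'a poly poly \<Rightarrow> 'a) w) = 0" for s :: "'a::{field,finite}" by (simp add: fun_eq_iff)
  then show ?thesis by (simp add: Ls_def Lambda_zero Hs_0)
qed

lemma Ls_sum: "(\<And>i. i \<in> A \<Longrightarrow> g i \<in> Ls n) \<Longrightarrow> sum g A \<in> Ls n"
  by (induction A rule: infinite_finite_induct) (simp_all add: Ls_0 Ls_add)

lemma Ls_D: "\<xi> \<in> Lambda n \<Longrightarrow> act n t \<xi> - \<xi> \<in> Ls n"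
proof -
  assume a: "\<xi> \<in> Lambda n"
  have "(\<lambda>w. s * (act n t \<xi> - \<xi>) w) = act n t (\<lambda>w. s * \<xi> w) - (\<lambda>w. s * \<xi> w)" for s
    by (simp add: act_scale fun_eq_iff algebra_simps)
  then show ?thesis using a by (simp add: Ls_def Lambda_diff act_Lambda Hs_D Lambda_scale)
qed

lemma Ls_Hs: "\<eta> \<in> Ls n \<Longrightarrow> \<eta> \<in> Hs n"
  unfolding Ls_def by (metis (no_types, lifting) mem_Collect_eq mult_1 ext)

lemma Ls_Lambda: "\<eta> \<in> Ls n \<Longrightarrow> \<eta> \<in> Lambda n"
  by (simp add: Ls_def)

lemma Ls_reduce:
  fixes v :: "'k::{field,finite} poly poly \<Rightarrow> 'k"
  assumes v: "v \<in> Ls n" and J: "J \<subseteq> {..n}" and dJ: "\<And>j. j \<in> J \<Longrightarrow> (dl n j :: 'k poly poly \<Rightarrow> 'k) \<in> Ls n"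
  shows "v - (\<Sum>j\<in>J. (\<lambda>w. v (fi n j) * dl n j w)) \<in> Ls n"
    and "\<And>i. i \<le> n \<Longrightarrow> (v - (\<Sum>j\<in>J. (\<lambda>w. v (fi n j) * dl n j w))) (fi n i) = (if i \<in> J then 0 else v (fi n i))"
proof -
  show "v - (\<Sum>j\<in>J. (\<lambda>w. v (fi n j) * dl n j w)) \<in> Ls n"
    using dJ by (auto intro!: Ls_diff v Ls_sum Ls_scale)
  fix i assume i: "i \<le> n"
  have fin: "finite J" using J finite_subset by blast
  have "(\<Sum>j\<in>J. (\<lambda>w. v (fi n j) * dl n j w)) (fi n i) = (\<Sum>j\<in>J. if j = i then v (fi n j) else 0)"
    unfolding sum_fun_apply using J i by (intro sum.cong refl) (auto simp: dl_fi)
  also have "\<dots> = (if i \<in> J then v (fi n i) else 0)" using fin by (simp add: sum.delta')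
  finally show "(v - (\<Sum>j\<in>J. (\<lambda>w. v (fi n j) * dl n j w))) (fi n i) = (if i \<in> J then 0 else v (fi n i))"
    by simp
qed

lemma vval: "i \<le> n \<Longrightarrow> k \<le> n \<Longrightarrow> (act n t (dl n k) - dl n k) (fi n i)
   = (if k \<le> i then of_nat (i choose k) * (-t)^(i-k) else 0) - (if k = i then 1 else 0)"
  by (simp add: act_dl_fi dl_fi)

lemma dl_mid_Ls:
  assumes ch: "CHAR('k::{field,finite}) = p" and pr: "Factorial_Ring.prime p"
  shows "2 \<le> k \<Longrightarrow> k \<le> p - 1 \<Longrightarrow> (dl p k :: 'k poly poly \<Rightarrow> 'k) \<in> Ls p"
proof (induction "p - 1 - k" arbitrary: k rule: less_induct)
  case less
  define v :: "'k poly poly \<Rightarrow> 'k" where "v = act p 1 (dl p (k - 1)) - dl p (k - 1)"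
  have vL: "v \<in> Ls p" unfolding v_def by (intro Ls_D dl_Lambda)
  have J: "{k<..<p} \<subseteq> {..p}" by auto
  have dJ: "(dl p j :: 'k poly poly \<Rightarrow> 'k) \<in> Ls p" if "j \<in> {k<..<p}" for j
    using that less by (intro less.hyps) auto
  define R where "R = v - (\<Sum>j\<in>{k<..<p}. (\<lambda>w. v (fi p j) * dl p j w))"
  have RL: "R \<in> Ls p" unfolding R_def by (rule Ls_reduce(1)[OF vL J dJ])
  have Rv: "R (fi p i) = (if i \<in> {k<..<p} then 0 else v (fi p i))" if "i \<le> p" for i
    unfolding R_def by (rule Ls_reduce(2)[OF vL J dJ that])
  have kk: "k choose (k - 1) = k" using binomial_symmetric[of 1 k] less by simp
  have vk: "v (fi p k) = - of_nat k"
    using less kk by (simp add: v_def act_dl_fi dl_fi)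
  have vk0: "v (fi p k) \<noteq> 0"
  proof
    assume "v (fi p k) = 0"
    then have "(of_nat k :: 'k) = 0" using vk by simp
    then have "p dvd k" using ch by (simp add: of_nat_eq_0_iff_char_dvd)
    then show False using less by (auto dest: dvd_imp_le)
  qed
  have vp: "v (fi p p) = 0"
  proof -
    have "p dvd (p choose (k - 1))"
      using less prime_gt_0_nat[OF pr] by (intro dvd_choose_prime pr) auto
    then have "(of_nat (p choose (k - 1)) :: 'k) = 0" using ch by (simp add: of_nat_eq_0_iff_char_dvd)
    then show ?thesis using less by (simp add: v_def act_dl_fi dl_fi)
  qed
  have vlow: "v (fi p i) = 0" if "i < k" for i
    using that less by (auto simp: v_def act_dl_fi dl_fi)
  have "R = (\<lambda>w. v (fi p k) * dl p k w)"
  proof (rule lam_eqI)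
    show "R \<in> Lambda p" using RL by (rule Ls_Lambda)
    show "(\<lambda>w. v (fi p k) * dl p k w) \<in> Lambda p" by (intro Lambda_scale dl_Lambda)
    fix i assume i: "i \<le> p"
    show "R (fi p i) = v (fi p k) * dl p k (fi p i)"
      using i less vp vlow by (cases "i < k"; cases "i = p") (auto simp: Rv dl_fi)
  qed
  then have "(\<lambda>w. inverse (v (fi p k)) * R w) = dl p k"
    using vk0 by (simp add: fun_eq_iff)
  moreover have "(\<lambda>w. inverse (v (fi p k)) * R w) \<in> Ls p" by (rule Ls_scale[OF RL])
  ultimately show ?case by simp
qed

lemma dl_ends_Ls:
  assumes ch: "CHAR('k::{field,finite}) = p" and pr: "Factorial_Ring.prime p" and od: "odd p"
    and c: "(c::'k) ^ p \<noteq> c"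
  shows "(dl p 1 :: 'k poly poly \<Rightarrow> 'k) \<in> Ls p \<and> (dl p p :: 'k poly poly \<Rightarrow> 'k) \<in> Ls p"
proof -
  have p3: "p \<ge> 3" using pr od prime_gt_1_nat[OF pr]
    by (metis One_nat_def Suc_1 Suc_leI even_numeral le_neq_implies_less numeral_3_eq_3)
  define R :: "'k \<Rightarrow> 'k poly poly \<Rightarrow> 'k" where
    "R s = (act p (-s) (dl p 0) - dl p 0) - (\<Sum>j\<in>{1<..<p}. (\<lambda>w. (act p (-s) (dl p 0) - dl p 0) (fi p j) * dl p j w))" for s
  have J: "{1<..<p} \<subseteq> {..p}" by auto
  have dJ: "(dl p j :: 'k poly poly \<Rightarrow> 'k) \<in> Ls p" if "j \<in> {1<..<p}" for j
    using that by (intro dl_mid_Ls[OF ch pr]) auto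
  have vL: "act p (-s) (dl p 0) - dl p 0 \<in> Ls p" for s by (intro Ls_D dl_Lambda)
  have RL: "R s \<in> Ls p" for s unfolding R_def by (rule Ls_reduce(1)[OF vL J dJ])
  have Rv: "R s (fi p i) = (if i = 1 then s else if i = p then s ^ p else 0)" if "i \<le> p" for s i
  proof -
    have "R s (fi p i) = (if i \<in> {1<..<p} then 0 else (act p (-s) (dl p 0) - dl p 0) (fi p i))"
      unfolding R_def by (rule Ls_reduce(2)[OF vL J dJ that])
    then show ?thesis using that p3 by (cases "i = 0") (auto simp: act_dl_fi dl_fi)
  qed
  define A where "A = (\<lambda>w. c * R 1 w) - R c"
  have AL: "A \<in> Ls p" unfolding A_def by (intro Ls_diff Ls_scale RL)
  have "A = (\<lambda>w. (c - c ^ p) * dl p p w)"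
  proof (rule lam_eqI)
    show "A \<in> Lambda p" using AL by (rule Ls_Lambda)
    show "(\<lambda>w. (c - c ^ p) * dl p p w) \<in> Lambda p" by (intro Lambda_scale dl_Lambda)
    fix i assume i: "i \<le> p"
    show "A (fi p i) = (c - c ^ p) * dl p p (fi p i)"
      using i p3 by (simp add: A_def Rv dl_fi)
  qed
  then have "(\<lambda>w. inverse (c - c ^ p) * A w) = dl p p"
    using c by (simp add: fun_eq_iff)
  moreover have "(\<lambda>w. inverse (c - c ^ p) * A w) \<in> Ls p" by (rule Ls_scale[OF AL])
  ultimately have dp: "(dl p p :: 'k poly poly \<Rightarrow> 'k) \<in> Ls p" by simp
  have "R 1 - dl p p = dl p 1"
  proof (rule lam_eqI)
    show "R 1 - dl p p \<in> Lambda p" by (intro Lambda_diff Ls_Lambda[OF RL] dl_Lambda)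
    show "dl p 1 \<in> Lambda p" by (rule dl_Lambda)
    fix i assume i: "i \<le> p"
    show "(R 1 - dl p p) (fi p i) = dl p 1 (fi p i)"
      using i p3 by (simp add: Rv dl_fi)
  qed
  moreover have "R 1 - dl p p \<in> Ls p" by (intro Ls_diff RL dp)
  ultimately show ?thesis using dp by simp
qed

lemma exists_nonfixed:
  assumes pr: "Factorial_Ring.prime p" and m: "m > 1" and card: "card (UNIV :: 'k::{field,finite} set) = p ^ m"
  shows "\<exists>c::'k. c ^ p \<noteq> c"
proof (rule ccontr)
  assume "\<not> ?thesis"
  then have all: "\<And>c::'k. c ^ p = c" by blast
  define P :: "'k poly" where "P = monom 1 p - [:0, 1:]"
  have p2: "p \<ge> 2" using prime_gt_1_nat[OF pr] by simp
  have "coeff P p = 1" using p2 unfolding P_def by (simp add: coeff_pCons split: nat.split)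
  then have P0: "P \<noteq> 0" by auto
  have degP: "degree P \<le> p" unfolding P_def using p2
    by (intro degree_diff_le) (simp_all add: degree_monom_le)
  have "{x. poly P x = 0} = UNIV" using all by (auto simp: P_def poly_monom)
  then have "card (UNIV :: 'k set) \<le> p" using card_poly_roots_bound[OF P0] degP by simp
  moreover have "p < p ^ m" using p2 m by (simp add: power_strict_increasing_iff[of p 1 m, simplified])
  ultimately show False using card by simp
qed

lemma K_sub_comm:
  assumes ch: "CHAR('k::{field,finite}) = p" and pr: "Factorial_Ring.prime p" and od: "odd p"
    and m: "m > 1" and card: "card (UNIV :: 'k set) = p ^ m"
  shows "(Kset p :: ('k \<times> _) set) \<subseteq> comm_sub (S_Lambda p) (V_sub p) (carrier (S_Lambda p))"
proof
  fix x :: "'k \<times> _" assume x: "x \<in> Kset p"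
  then obtain \<eta> where xe: "x = (0, \<eta>)" "\<eta> \<in> Lambda p" "\<eta> (fi p 0) = 0"
    by (cases x) (auto simp: Kset_def S_carrier)
  obtain c :: 'k where c: "c ^ p \<noteq> c" using exists_nonfixed[OF pr m card] by blast
  have p1: "p \<ge> 1" using prime_gt_0_nat[OF pr] by simp
  have dk: "(dl p k :: 'k poly poly \<Rightarrow> 'k) \<in> Ls p" if k: "k \<in> {1..p}" for k
  proof -
    consider "k = 1" | "k = p" | "2 \<le> k \<and> k \<le> p - 1" using k by force
    then show ?thesis
      using dl_ends_Ls[OF ch pr od c] dl_mid_Ls[OF ch pr] by cases auto
  qed
  have "\<eta> = (\<Sum>k\<in>{1..p}. (\<lambda>w. \<eta> (fi p k) * dl p k w))"
  proof (rule lam_eqI)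
    show "\<eta> \<in> Lambda p" by (rule xe(2))
    show "(\<Sum>k\<in>{1..p}. (\<lambda>w. \<eta> (fi p k) * dl p k w)) \<in> Lambda p"
      by (intro Lambda_sum Lambda_scale dl_Lambda)
    fix i assume i: "i \<le> p"
    have "(\<Sum>k\<in>{1..p}. (\<lambda>w. \<eta> (fi p k) * dl p k w)) (fi p i) = (\<Sum>k\<in>{1..p}. if k = i then \<eta> (fi p k) else 0)"
      unfolding sum_fun_apply using i by (intro sum.cong refl) (auto simp: dl_fi)
    also have "\<dots> = \<eta> (fi p i)" using i xe(3) by (cases "i = 0") (auto simp: sum.delta')
    finally show "\<eta> (fi p i) = (\<Sum>k\<in>{1..p}. (\<lambda>w. \<eta> (fi p k) * dl p k w)) (fi p i)" by simp
  qed
  moreover have "(\<Sum>k\<in>{1..p}. (\<lambda>w. \<eta> (fi p k) * dl p k w)) \<in> Ls p"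
    by (intro Ls_sum Ls_scale dk)
  ultimately have "\<eta> \<in> Hs p" using Ls_Hs by metis
  then show "x \<in> comm_sub (S_Lambda p) (V_sub p) (carrier (S_Lambda p))"
    by (simp add: xe Hs_def comm_sub_gens)
qed

lemma U_K: "U_sub n <#>\<^bsub>S_Lambda n\<^esub> Kset n = (Mset n :: ('k::{field,finite} \<times> _) set)"
proof
  show "U_sub n <#>\<^bsub>S_Lambda n\<^esub> Kset n \<subseteq> (Mset n :: ('k \<times> _) set)"
  proof
    fix x :: "'k \<times> _" assume "x \<in> U_sub n <#>\<^bsub>S_Lambda n\<^esub> Kset n"
    then obtain c \<eta> where "x = (c, \<lambda>_. 0) \<otimes>\<^bsub>S_Lambda n\<^esub> (0, \<eta>)" "\<eta> \<in> Lambda n" "\<eta> (fi n 0) = 0"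
      by (auto simp: set_mult_def U_sub_def Kset_def S_carrier)
    moreover have "act n 0 (\<lambda>_. 0) = (0 :: 'k poly poly \<Rightarrow> 'k)"
      using act_zero[of n 0] by (simp add: zero_fun_def)
    ultimately show "x \<in> Mset n" by (simp add: S_mult Mset_eq)
  qed
  show "(Mset n :: ('k \<times> _) set) \<subseteq> U_sub n <#>\<^bsub>S_Lambda n\<^esub> Kset n"
  proof
    fix x :: "'k \<times> _" assume "x \<in> Mset n"
    then obtain c \<eta> where xe: "x = (c, \<eta>)" "\<eta> \<in> Lambda n" "\<eta> (fi n 0) = 0"
      by (auto simp: Mset_eq)
    have "act n 0 (\<lambda>_. 0) = (0 :: 'k poly poly \<Rightarrow> 'k)"
      using act_zero[of n 0] by (simp add: zero_fun_def)
    then have "x = (c, \<lambda>_. 0) \<otimes>\<^bsub>S_Lambda n\<^esub> (0, \<eta>)" by (simp add: S_mult xe)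
    moreover have "(c, \<lambda>_. 0) \<in> U_sub n" by (simp add: U_sub_def)
    moreover have "(0, \<eta>) \<in> Kset n" using xe by (simp add: Kset_def S_carrier)
    ultimately show "x \<in> U_sub n <#>\<^bsub>S_Lambda n\<^esub> Kset n"
      unfolding set_mult_def by blast
  qed
qed

lemma index_iff:
  assumes sg: "subgroup N (S_Lambda n :: ('k::{field,finite} \<times> _) monoid)"
  shows "card (rcosets\<^bsub>S_Lambda n\<^esub> N) = card (UNIV :: 'k set) \<longleftrightarrow> card N = card (UNIV :: 'k set) ^ (n + 1)"
proof -
  have L: "card (rcosets\<^bsub>S_Lambda n\<^esub> N) * card N = card (UNIV :: 'k set) ^ (n + 2)"
    using group.lagrange[OF group_S sg] by (simp add: Coset.order_def card_carrier)
  have q0: "card (UNIV :: 'k set) > 0" by (simp add: card_gt_0_iff)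
  show ?thesis
  proof
    assume "card (rcosets\<^bsub>S_Lambda n\<^esub> N) = card (UNIV :: 'k set)"
    then have "card (UNIV :: 'k set) * card N = card (UNIV :: 'k set) * card (UNIV :: 'k set) ^ (n + 1)"
      using L by simp
    then show "card N = card (UNIV :: 'k set) ^ (n + 1)" using q0 by simp
  next
    assume "card N = card (UNIV :: 'k set) ^ (n + 1)"
    then have "card (rcosets\<^bsub>S_Lambda n\<^esub> N) * card (UNIV :: 'k set) ^ (n + 1) = card (UNIV :: 'k set) * card (UNIV :: 'k set) ^ (n + 1)"
      using L by simp
    then show "card (rcosets\<^bsub>S_Lambda n\<^esub> N) = card (UNIV :: 'k set)" using q0 by simp
  qed
qed

lemma exp_iso:
  fixes G (structure)
  assumes grp: "group G" and phi: "\<phi> \<in> iso G G" and H: "H \<subseteq> carrier G" and ex: "has_exponent G H e"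
  shows "has_exponent G (\<phi> ` H) e"
proof -
  have gh: "group_hom G G \<phi>" using phi grp by (simp add: group_hom_def group_hom_axioms_def iso_def)
  have inj: "inj_on \<phi> (carrier G)" using phi by (simp add: iso_def bij_betw_def)
  have pw: "\<phi> (x [^] (k::nat)) = \<phi> x [^] k" if "x \<in> carrier G" for x k
    using group_hom.hom_nat_pow[OF gh that] .
  have one: "\<phi> \<one> = \<one>" using group_hom.hom_one[OF gh] .
  have iff: "\<phi> x [^] (k::nat) = \<one> \<longleftrightarrow> x [^] k = \<one>" if "x \<in> carrier G" for x k
  proof -
    have "\<phi> x [^] k = \<one> \<longleftrightarrow> \<phi> (x [^] k) = \<phi> \<one>" using pw[OF that] one by simp
    also have "\<dots> \<longleftrightarrow> x [^] k = \<one>"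
      using inj that grp by (auto dest: inj_onD intro: monoid.nat_pow_closed group.is_monoid)
    finally show ?thesis .
  qed
  have all: "(\<forall>y\<in>\<phi> ` H. y [^] (k::nat) = \<one>) \<longleftrightarrow> (\<forall>x\<in>H. x [^] k = \<one>)" for k
    using H iff by auto
  show ?thesis using ex unfolding has_exponent_def all by blast
qed

theorem lemma2p17:
  fixes p m :: nat
  assumes "Factorial_Ring.prime p" and "odd p" and "m > 1"
    and "card (UNIV :: 'k set) = p ^ m"
  defines "S \<equiv> (S_Lambda p :: ('k::{field,finite} \<times> ('k poly poly \<Rightarrow> 'k)) monoid)"
  shows "{N. N \<lhd> S \<and> card (rcosets\<^bsub>S\<^esub> N) = p ^ m \<and> has_exponent S N p}
           = {V_sub p, U_sub p <#>\<^bsub>S\<^esub> comm_sub S (V_sub p) (carrier S)}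
         \<and> characteristic S (U_sub p <#>\<^bsub>S\<^esub> comm_sub S (V_sub p) (carrier S))"
proof -
  note pr = assms(1) and od = assms(2) and m = assms(3) and cd = assms(4)
  have ch: "CHAR('k) = p" by (rule char_eq[OF pr cd])
  have comm: "comm_sub S (V_sub p) (carrier S) = Kset p"
    unfolding S_def using comm_sub_K K_sub_comm[OF ch pr od m cd] by blast
  have UK: "U_sub p <#>\<^bsub>S\<^esub> comm_sub S (V_sub p) (carrier S) = Mset p"
    unfolding comm unfolding S_def by (rule U_K)
  have q: "p ^ m = card (UNIV :: 'k set)" using cd by simp
  have setEq: "{N. N \<lhd> S \<and> card (rcosets\<^bsub>S\<^esub> N) = p ^ m \<and> has_exponent S N p} = {V_sub p, Mset p}"
  proof
    show "{N. N \<lhd> S \<and> card (rcosets\<^bsub>S\<^esub> N) = p ^ m \<and> has_exponent S N p} \<subseteq> {V_sub p, Mset p}"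
    proof
      fix N assume "N \<in> {N. N \<lhd> S \<and> card (rcosets\<^bsub>S\<^esub> N) = p ^ m \<and> has_exponent S N p}"
      then have N: "N \<lhd> S" "card (rcosets\<^bsub>S\<^esub> N) = p ^ m" "has_exponent S N p" by auto
      have sg: "subgroup N S" using N(1) by (rule normal_imp_subgroup)
      have cN: "card N = card (UNIV :: 'k set) ^ (p + 1)"
        using index_iff[OF sg[unfolded S_def]] N(2) q by (simp add: S_def)
      have ex: "\<And>x. x \<in> N \<Longrightarrow> x [^]\<^bsub>S\<^esub> p = \<one>\<^bsub>S\<^esub>" using N(3) by (simp add: has_exponent_def)
      have "N \<subseteq> V_sub p \<or> N \<subseteq> Mset p"
        by (rule subset_V_or_M[OF ch pr od sg[unfolded S_def] ex[unfolded S_def]])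
      moreover have fV: "finite (V_sub p :: ('k \<times> _) set)"
        by (rule card_ge_0_finite) (simp add: card_V card_gt_0_iff)
      moreover have fM: "finite (Mset p :: ('k \<times> _) set)"
        by (rule card_ge_0_finite) (simp add: card_M card_gt_0_iff)
      ultimately have "N = V_sub p \<or> N = Mset p"
        using cN card_V[of p] card_M[of p] card_subset_eq by metis
      then show "N \<in> {V_sub p, Mset p}" by blast
    qed
    show "{V_sub p, Mset p} \<subseteq> {N. N \<lhd> S \<and> card (rcosets\<^bsub>S\<^esub> N) = p ^ m \<and> has_exponent S N p}"
    proof -
      have "V_sub p \<lhd> S" unfolding S_def by (rule V_normal)
      moreover have "card (rcosets\<^bsub>S\<^esub> (V_sub p)) = p ^ m"
      proof -
        have "card (rcosets\<^bsub>S\<^esub> (V_sub p)) = card (UNIV :: 'k set)"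
          unfolding S_def by (rule index_iff[OF normal_imp_subgroup[OF V_normal], THEN iffD2]) (rule card_V)
        then show ?thesis using q by simp
      qed
      moreover have "has_exponent S (V_sub p) p" unfolding S_def by (rule exp_V[OF ch pr od])
      moreover have "Mset p \<lhd> S" unfolding S_def by (rule M_normal)
      moreover have "card (rcosets\<^bsub>S\<^esub> (Mset p)) = p ^ m"
      proof -
        have "card (rcosets\<^bsub>S\<^esub> (Mset p)) = card (UNIV :: 'k set)"
          unfolding S_def by (rule index_iff[OF normal_imp_subgroup[OF M_normal], THEN iffD2]) (rule card_M)
        then show ?thesis using q by simp
      qed
      moreover have "has_exponent S (Mset p) p" unfolding S_def by (rule exp_M[OF ch pr od])
      ultimately show ?thesis by auto
    qed
  qed
  have charM: "characteristic S (Mset p)"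
    unfolding characteristic_def
  proof
    fix \<phi> assume phi: "\<phi> \<in> iso S S"
    have grp: "group S" unfolding S_def by (rule group_S)
    have Msub: "Mset p \<subseteq> carrier S" by (auto simp: Mset_def S_def)
    have inj: "inj_on \<phi> (carrier S)" using phi by (simp add: iso_def bij_betw_def)
    have hom: "\<phi> \<in> hom S S" using phi by (simp add: iso_def)
    have mn: "Mset p \<lhd> S" unfolding S_def by (rule M_normal)
    have nrm: "\<phi> ` Mset p \<lhd> S" by (rule iso_normal_subgroup[OF phi grp grp mn])
    have cM: "card (\<phi> ` Mset p) = card (Mset p :: ('k \<times> _) set)"
      using card_image[OF inj_on_subset[OF inj Msub]] .
    have idx: "card (rcosets\<^bsub>S\<^esub> (\<phi> ` Mset p)) = p ^ m"
    proof -
      have "card (rcosets\<^bsub>S\<^esub> (\<phi> ` Mset p)) = card (UNIV :: 'k set)"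
        unfolding S_def by (rule index_iff[OF normal_imp_subgroup[OF nrm[unfolded S_def]], THEN iffD2]) (simp add: cM card_M)
      then show ?thesis using q by simp
    qed
    have exM: "has_exponent S (\<phi> ` Mset p) p"
      by (rule exp_iso[OF grp phi Msub]) (simp add: S_def exp_M[OF ch pr od])
    have "\<phi> ` Mset p \<in> {N. N \<lhd> S \<and> card (rcosets\<^bsub>S\<^esub> N) = p ^ m \<and> has_exponent S N p}"
      using nrm idx exM by simp
    then have "\<phi> ` Mset p \<in> {V_sub p, Mset p}" by (simp only: setEq)
    moreover have "\<phi> ` Mset p \<noteq> V_sub p"
    proof
      assume eqV: "\<phi> ` Mset p = V_sub p"
      define a :: "'k \<times> ('k poly poly \<Rightarrow> 'k)" where "a = (1, 0)"
      define b :: "'k \<times> ('k poly poly \<Rightarrow> 'k)" where "b = (0, dl p 1)"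
      have p3: "p \<ge> 3" using pr od prime_gt_1_nat[OF pr]
        by (metis One_nat_def Suc_1 Suc_leI even_numeral le_neq_implies_less numeral_3_eq_3)
      have aM: "a \<in> Mset p" by (simp add: a_def Mset_eq Lambda_zero)
      have bM: "b \<in> Mset p" using p3 by (simp add: b_def Mset_eq dl_Lambda dl_fi)
      have ac: "a \<in> carrier S" and bc: "b \<in> carrier S" using aM bM Msub by auto
      have Vcomm: "x \<otimes>\<^bsub>S\<^esub> y = y \<otimes>\<^bsub>S\<^esub> x" if "x \<in> V_sub p" "y \<in> V_sub p" for x y
        using that by (auto simp: V_sub_def S_def S_mult act_0 add.commute)
      have "\<phi> (a \<otimes>\<^bsub>S\<^esub> b) = \<phi> a \<otimes>\<^bsub>S\<^esub> \<phi> b" using hom ac bc by (rule hom_mult)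
      also have "\<dots> = \<phi> b \<otimes>\<^bsub>S\<^esub> \<phi> a"
      proof (rule Vcomm)
        show "\<phi> a \<in> V_sub p" using aM eqV by (metis imageI)
        show "\<phi> b \<in> V_sub p" using bM eqV by (metis imageI)
      qed
      also have "\<dots> = \<phi> (b \<otimes>\<^bsub>S\<^esub> a)" using hom bc ac by (simp add: hom_mult)
      finally have eqab: "\<phi> (a \<otimes>\<^bsub>S\<^esub> b) = \<phi> (b \<otimes>\<^bsub>S\<^esub> a)" .
      have "a \<otimes>\<^bsub>S\<^esub> b = b \<otimes>\<^bsub>S\<^esub> a"
        by (rule inj_onD[OF inj eqab monoid.m_closed[OF group.is_monoid[OF grp] ac bc]
              monoid.m_closed[OF group.is_monoid[OF grp] bc ac]])
      then have "snd (a \<otimes>\<^bsub>S\<^esub> b) (fi p 2) = snd (b \<otimes>\<^bsub>S\<^esub> a) (fi p 2)" by simp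
      moreover have "snd (a \<otimes>\<^bsub>S\<^esub> b) (fi p 2) = 0"
        using p3 by (simp add: a_def b_def S_def S_mult act_zero dl_fi)
      moreover have "snd (b \<otimes>\<^bsub>S\<^esub> a) (fi p 2) = - 2"
        using p3 by (simp add: a_def b_def S_def S_mult act_dl_fi)
      moreover have "(2::'k) \<noteq> 0"
      proof
        assume "(2::'k) = 0"
        then have "(of_nat 2 :: 'k) = 0" by simp
        then have "p dvd 2" using ch by (simp only: of_nat_eq_0_iff_char_dvd)
        then show False using p3 by (auto dest: dvd_imp_le)
      qed
      ultimately show False by simp
    qed
    ultimately show "\<phi> ` Mset p = Mset p" by blast
  qed
  show ?thesis using setEq charM UK by simp
qed

end
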